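(* For every semi-simple probabilistic Rabin word automaton $\mathcal{W}$ one can effectively construct a simple probabilistic Rabin word automaton $\mathcal{W}'$ such that $\mathcal{L}^{=1}(\mathcal{W})=\varnothing$ iff $\mathcal{L}^{=1}(\mathcal{W}')=\varnothing$, and $\mathcal{L}^{>0}(\mathcal{W})=\varnothing$ iff $\mathcal{L}^{>0}(\mathcal{W}')=\varnothing$.
   Context: A probabilistic word automaton is a tuple $\mathcal{W}=(Q,\Sigma,\delta,q_\iota,\mathrm{Acc})$ with $Q$ finite, $\Sigma$ a finite alphabet, $\delta:Q\times\Sigma\times Q\to[0,1]$ with $\sum_{p}\delta(q,a,p)=1$ for all $q,a$, initial state $q_\iota$, and acceptance condition $\mathrm{Acc}\subseteq Q^\omega$. A run on $w\in\Sigma^\omega$ is $r\in Q^\omega$ with $r_0=q_\iota$ and $\delta(r_i,w_i,r_{i+1})>0$ for all $i$; $\mu_w$ is the induced probability measure on runs (cone of prefix $r_0\dots r_n$ has measure $\prod_{i<n}\delta(r_i,w_i,r_{i+1})$), and $\mathcal{W}(w)=\mu_w(\text{accepting runs})$. $\mathcal{L}^{>0}(\mathcal{W})=\{w:\mathcal{W}(w)>0\}$ and $\mathcal{L}^{=1}(\mathcal{W})=\{w:\mathcal{W}(w)=1\}$. Rabin condition with pairs $\langle\alpha_1,\beta_1\rangle,\dots,\langle\alpha_k,\beta_k\rangle$: a run $r$ is accepting iff for some $i$, some state of $\alpha_i$ occurs infinitely often in $r$ and no state of $\beta_i$ occurs infinitely often in $r$. Simple: all transition probabilities lie in $\{0,\tfrac12,1\}$.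 Semi-simple: all transition probabilities are of the form $p/2^q$ with $p,q\in\mathbb{N}$. (The alphabet of $\mathcal{W}'$ may differ from that of $\mathcal{W}$.) *)

theory Defs
  imports "HOL-Probability.Probability" "HOL-Library.Nat_Bijection"
begin

record ('q, 'a) pra =
  states   :: "'q set"
  alphabet :: "'a set"
  trans    :: "'q \<Rightarrow> 'a \<Rightarrow> 'q \<Rightarrow> real"
  initial  :: "'q"
  pairs    :: "('q set \<times> 'q set) list"

definition wf_pra :: "('q, 'a) pra \<Rightarrow> bool" where
  "wf_pra A \<longleftrightarrow> finite (states A) \<and> finite (alphabet A) \<and> initial A \<in> states A \<and>
     (\<forall>q\<in>states A. \<forall>a\<in>alphabet A.
        (\<forall>p. trans A q a p \<ge> 0 \<and> (p \<notin> states A \<longrightarrow> trans A q a p = 0)) \<and>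
        (\<Sum>p\<in>states A. trans A q a p) = 1)"

definition simple_pra :: "('q, 'a) pra \<Rightarrow> bool" where
  "simple_pra A \<longleftrightarrow> (\<forall>q\<in>states A. \<forall>a\<in>alphabet A. \<forall>p\<in>states A.
      trans A q a p \<in> {0, 1/2, 1})"

definition semi_simple_pra :: "('q, 'a) pra \<Rightarrow> bool" where
  "semi_simple_pra A \<longleftrightarrow> (\<forall>q\<in>states A. \<forall>a\<in>alphabet A. \<forall>p\<in>states A.
      \<exists>u e :: nat. trans A q a p = real u / 2 ^ e)"

definition run_space :: "('q, 'a) pra \<Rightarrow> (nat \<Rightarrow> 'q) measure" where
  "run_space A = PiM UNIV (\<lambda>_::nat. count_space (states A))"

definition cylinder :: "('q, 'a) pra \<Rightarrow> (nat \<Rightarrow> 'q) \<Rightarrow> nat \<Rightarrow> (nat \<Rightarrow> 'q) set" where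
  "cylinder A x n = {r \<in> space (run_space A). \<forall>i\<le>n. r i = x i}"

definition cyl_prob :: "('q, 'a) pra \<Rightarrow> (nat \<Rightarrow> 'a) \<Rightarrow> (nat \<Rightarrow> 'q) \<Rightarrow> nat \<Rightarrow> real" where
  "cyl_prob A w x n =
     (if x 0 = initial A then (\<Prod>i<n. trans A (x i) (w i) (x (Suc i))) else 0)"

definition run_measure :: "('q, 'a) pra \<Rightarrow> (nat \<Rightarrow> 'a) \<Rightarrow> (nat \<Rightarrow> 'q) measure" where
  "run_measure A w = (THE M. prob_space M \<and> sets M = sets (run_space A) \<and>
      (\<forall>n x. (\<forall>i\<le>n. x i \<in> states A) \<longrightarrow> measure M (cylinder A x n) = cyl_prob A w x n))"

definition rabin_accepting :: "('q, 'a) pra \<Rightarrow> (nat \<Rightarrow> 'q) \<Rightarrow> bool" where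
  "rabin_accepting A r \<longleftrightarrow> (\<exists>(\<alpha>, \<beta>)\<in>set (pairs A).
      (\<exists>q\<in>\<alpha>. \<exists>\<^sub>\<infinity>i. r i = q) \<and> (\<forall>q\<in>\<beta>. \<not> (\<exists>\<^sub>\<infinity>i. r i = q)))"

definition acc_prob :: "('q, 'a) pra \<Rightarrow> (nat \<Rightarrow> 'a) \<Rightarrow> real" where
  "acc_prob A w = measure (run_measure A w) {r \<in> space (run_space A). rabin_accepting A r}"

definition words :: "('q, 'a) pra \<Rightarrow> (nat \<Rightarrow> 'a) set" where
  "words A = {w. \<forall>i. w i \<in> alphabet A}"

definition lang_pos :: "('q, 'a) pra \<Rightarrow> (nat \<Rightarrow> 'a) set" where
  "lang_pos A = {w \<in> words A. acc_prob A w > 0}"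

definition lang_one :: "('q, 'a) pra \<Rightarrow> (nat \<Rightarrow> 'a) set" where
  "lang_one A = {w \<in> words A. acc_prob A w = 1}"

text \<open>Code: number of states n (states 0..<n), number of letters m (letters 0..<m),
  initial state, transition entries (q, a, p, u, e) each contributing u / 2^e to
  delta(q,a,p), and Rabin pairs given as lists of states.\<close>
datatype pra_code = PraCode (c_nstates: nat) (c_nletters: nat) (c_init: nat)
  (c_trans: "(nat \<times> nat \<times> nat \<times> nat \<times> nat) list") (c_rabin: "(nat list \<times> nat list) list")

definition aut_of :: "pra_code \<Rightarrow> (nat, nat) pra" where
  "aut_of D = \<lparr> states = {..<c_nstates D}, alphabet = {..<c_nletters D},
     trans = (\<lambda>q a p. \<Sum>(q', a', p', u, e) \<leftarrow> c_trans D.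
                if (q', a', p') = (q, a, p) then real u / 2 ^ e else 0),
     initial = c_init D,
     pairs = map (\<lambda>(al, be). (set al, set be)) (c_rabin D) \<rparr>"

definition encode_code :: "pra_code \<Rightarrow> nat" where
  "encode_code D = list_encode
     [c_nstates D, c_nletters D, c_init D,
      list_encode (map (\<lambda>(q, a, p, u, e). list_encode [q, a, p, u, e]) (c_trans D)),
      list_encode (map (\<lambda>(al, be). prod_encode (list_encode al, list_encode be)) (c_rabin D))]"

section \<open>Partial recursive functions (model of effective computation)\<close>

datatype recf = Zer | Succ | Proj nat | Comp recf "recf list" | PrimRec recf recf | Mu recf

inductive rec_eval :: "recf \<Rightarrow> nat list \<Rightarrow> nat \<Rightarrow> bool" where
  zer:  "rec_eval Zer xs 0"
| succ: "rec_eval Succ (x # xs) (Suc x)"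
| proj: "i < length xs \<Longrightarrow> rec_eval (Proj i) xs (xs ! i)"
| comp: "length ys = length gs \<Longrightarrow> (\<forall>i<length gs. rec_eval (gs ! i) xs (ys ! i)) \<Longrightarrow>
         rec_eval f ys z \<Longrightarrow> rec_eval (Comp f gs) xs z"
| prim0: "rec_eval f xs y \<Longrightarrow> rec_eval (PrimRec f g) (0 # xs) y"
| primS: "rec_eval (PrimRec f g) (n # xs) y \<Longrightarrow> rec_eval g (n # y # xs) z \<Longrightarrow>
          rec_eval (PrimRec f g) (Suc n # xs) z"
| mu:   "rec_eval f (n # xs) 0 \<Longrightarrow> (\<forall>m<n. \<exists>k. rec_eval f (m # xs) (Suc k)) \<Longrightarrow>
         rec_eval (Mu f) xs n"

end

theory Submission
  imports Defs
begin


fun evalr :: "recf \<Rightarrow> nat list \<Rightarrow> nat" where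
  "evalr Zer xs = 0"
| "evalr Succ xs = Suc (hd xs)"
| "evalr (Proj i) xs = xs ! i"
| "evalr (Comp f gs) xs = evalr f (map (\<lambda>g. evalr g xs) gs)"
| "evalr (PrimRec f g) xs = rec_nat (evalr f (tl xs)) (\<lambda>n y. evalr g (n # y # tl xs)) (hd xs)"
| "evalr (Mu f) xs = 0"

fun wa :: "nat \<Rightarrow> recf \<Rightarrow> bool" where
  "wa k Zer = True"
| "wa k Succ = (k \<ge> 1)"
| "wa k (Proj i) = (i < k)"
| "wa k (Comp f gs) = (wa (length gs) f \<and> (\<forall>g\<in>set gs. wa k g))"
| "wa k (PrimRec f g) = (k \<ge> 1 \<and> wa (k - 1) f \<and> wa (k + 1) g)"
| "wa k (Mu f) = False"

lemma wa_correct: "wa k f \<Longrightarrow> length xs = k \<Longrightarrow> rec_eval f xs (evalr f xs)"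
proof (induction f arbitrary: k xs)
  case Zer then show ?case by (simp add: rec_eval.zer)
next
  case Succ then show ?case by (cases xs) (auto intro: rec_eval.succ)
next
  case (Proj i) then show ?case by (auto intro: rec_eval.proj)
next
  case (Comp f gs)
  have w: "wa (length gs) f" "\<And>g. g \<in> set gs \<Longrightarrow> wa k g" using Comp.prems by auto
  have a: "\<forall>i<length gs. rec_eval (gs ! i) xs (map (\<lambda>g. evalr g xs) gs ! i)"
  proof (intro allI impI)
    fix i assume i: "i < length gs"
    then have "gs ! i \<in> set gs" by (rule nth_mem)
    then have "rec_eval (gs ! i) xs (evalr (gs ! i) xs)"
      using Comp.IH(2)[of "gs ! i" k xs] w Comp.prems by auto
    then show "rec_eval (gs ! i) xs (map (\<lambda>g. evalr g xs) gs ! i)" using i by simp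
  qed
  have b: "rec_eval f (map (\<lambda>g. evalr g xs) gs) (evalr f (map (\<lambda>g. evalr g xs) gs))"
    using Comp.IH(1)[of "length gs"] w by auto
  show ?case
    using rec_eval.comp[of "map (\<lambda>g. evalr g xs) gs" gs xs f, OF _ a b] by simp
next
  case (PrimRec f g)
  then obtain n ys where xs: "xs = n # ys" and ly: "length ys = k - 1"
    by (cases xs) auto
  have "rec_eval (PrimRec f g) (n # ys) (rec_nat (evalr f ys) (\<lambda>n y. evalr g (n # y # ys)) n)" for n
  proof (induction n)
    case 0 then show ?case using PrimRec ly by (auto intro: rec_eval.prim0)
  next
    case (Suc n) then show ?case using PrimRec ly by (auto intro: rec_eval.primS)
  qed
  then show ?case by (simp add: xs)
next
  case (Mu f) then show ?case by simp
qed

datatype exp = V nat | Kn nat | Plus exp exp | Minus exp exp | Times exp exp | If exp exp exp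
  | Loop exp exp exp

fun ee :: "nat list \<Rightarrow> exp \<Rightarrow> nat" where
  "ee env (V i) = env ! i"
| "ee env (Kn n) = n"
| "ee env (Plus a b) = ee env a + ee env b"
| "ee env (Minus a b) = ee env a - ee env b"
| "ee env (Times a b) = ee env a * ee env b"
| "ee env (If c a b) = (if ee env c \<noteq> 0 then ee env a else ee env b)"
| "ee env (Loop b i body) = rec_nat (ee env i) (\<lambda>n y. ee (n # y # env) body) (ee env b)"

fun wfe :: "nat \<Rightarrow> exp \<Rightarrow> bool" where
  "wfe k (V i) = (i < k)"
| "wfe k (Kn n) = True"
| "wfe k (Plus a b) = (wfe k a \<and> wfe k b)"
| "wfe k (Minus a b) = (wfe k a \<and> wfe k b)"
| "wfe k (Times a b) = (wfe k a \<and> wfe k b)"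
| "wfe k (If c a b) = (wfe k c \<and> wfe k a \<and> wfe k b)"
| "wfe k (Loop b i body) = (wfe k b \<and> wfe k i \<and> wfe (k + 2) body)"

fun cn :: "nat \<Rightarrow> recf" where
  "cn 0 = Zer"
| "cn (Suc n) = Comp Succ [cn n]"

lemma cn_ok[simp]: "wa k (cn n)" "evalr (cn n) xs = n"
  by (induction n) auto

definition "r_add = PrimRec (Proj 0) (Comp Succ [Proj 1])"
lemma r_add[simp]: "wa (Suc (Suc 0)) r_add" "evalr r_add [a, b] = a + b"
  by (simp_all add: r_add_def) (induction a; simp)

definition "r_mul = PrimRec Zer (Comp r_add [Proj 1, Proj 2])"
lemma r_mul[simp]: "wa (Suc (Suc 0)) r_mul" "evalr r_mul [a, b] = a * b"
  by (simp_all add: r_mul_def) (induction a; simp)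

definition "r_pred = PrimRec Zer (Proj 0)"
lemma r_pred[simp]: "wa (Suc 0) r_pred" "evalr r_pred [a] = a - 1"
  by (simp_all add: r_pred_def) (cases a; simp)

definition "r_subr = PrimRec (Proj 0) (Comp r_pred [Proj 1])"
lemma r_subr[simp]: "wa (Suc (Suc 0)) r_subr" "evalr r_subr [b, a] = a - b"
  by (simp_all add: r_subr_def) (induction b; simp)

definition "r_sub = Comp r_subr [Proj 1, Proj 0]"
lemma r_sub[simp]: "wa (Suc (Suc 0)) r_sub" "evalr r_sub [a, b] = a - b"
  by (simp_all add: r_sub_def)

definition "r_cond = PrimRec (Proj 1) (Proj 2)"
lemma r_cond[simp]: "wa (Suc (Suc (Suc 0))) r_cond" "evalr r_cond [c, a, b] = (if c \<noteq> 0 then a else b)"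
  by (simp_all add: r_cond_def) (cases c; simp)

fun cmp :: "nat \<Rightarrow> exp \<Rightarrow> recf" where
  "cmp k (V i) = Proj i"
| "cmp k (Kn n) = cn n"
| "cmp k (Plus a b) = Comp r_add [cmp k a, cmp k b]"
| "cmp k (Minus a b) = Comp r_sub [cmp k a, cmp k b]"
| "cmp k (Times a b) = Comp r_mul [cmp k a, cmp k b]"
| "cmp k (If c a b) = Comp r_cond [cmp k c, cmp k a, cmp k b]"
| "cmp k (Loop b i body) = Comp (PrimRec (cmp k i) (cmp (k + 2) body)) (cmp k b # map Proj [0..<k])"

lemma map_nth_upt: "length env = k \<Longrightarrow> map (\<lambda>g. evalr g env) (map Proj [0..<k]) = env"
  by (simp add: list_eq_iff_nth_eq)

lemma cmp_correct: "wfe k e \<Longrightarrow> wa k (cmp k e) \<and> (\<forall>env. length env = k \<longrightarrow> evalr (cmp k e) env = ee env e)"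
proof (induction e arbitrary: k)
  case (Loop b i body)
  then have ih: "wa k (cmp k b)" "wa k (cmp k i)" "wa (k+2) (cmp (k+2) body)"
    "\<And>env. length env = k \<Longrightarrow> evalr (cmp k b) env = ee env b"
    "\<And>env. length env = k \<Longrightarrow> evalr (cmp k i) env = ee env i"
    "\<And>env. length env = k + 2 \<Longrightarrow> evalr (cmp (k+2) body) env = ee env body"
    by auto
  show ?case
  proof (intro conjI allI impI)
    show "wa k (cmp k (Loop b i body))" using ih by (auto simp: numeral_2_eq_2)
  next
    fix env :: "nat list" assume l: "length env = k"
    have m: "map (\<lambda>g. evalr g env) (map Proj [0..<k]) = env" using map_nth_upt[OF l] .
    have "(\<lambda>n y. evalr (cmp (k + 2) body) (n # y # env)) = (\<lambda>n y. ee (n # y # env) body)"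
      using ih(6) l by auto
    then show "evalr (cmp k (Loop b i body)) env = ee env (Loop b i body)"
      using ih l m by simp
  qed
qed auto

lemma cmp_rec_eval: "wfe 1 e \<Longrightarrow> rec_eval (cmp 1 e) [x] (ee [x] e)"
  using cmp_correct[of 1 e] wa_correct[of 1 "cmp 1 e" "[x]"] by auto


fun shf :: "nat \<Rightarrow> exp \<Rightarrow> exp" where
  "shf c (V i) = V (if i < c then i else i + 2)"
| "shf c (Kn n) = Kn n"
| "shf c (Plus a b) = Plus (shf c a) (shf c b)"
| "shf c (Minus a b) = Minus (shf c a) (shf c b)"
| "shf c (Times a b) = Times (shf c a) (shf c b)"
| "shf c (If x a b) = If (shf c x) (shf c a) (shf c b)"
| "shf c (Loop b i body) = Loop (shf c b) (shf c i) (shf (c + 2) body)"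

lemma ee_shf: "length xs = c \<Longrightarrow> ee (xs @ a # b # env) (shf c e) = ee (xs @ env) e"
proof (induction e arbitrary: c xs)
  case (V i) then show ?case by (auto simp: nth_append)
next
  case (Loop b1 i1 body)
  have "ee ((n # y # xs) @ a # b # env) (shf (c + 2) body) = ee ((n # y # xs) @ env) body" for n y
    using Loop.IH(3)[of "n # y # xs"] Loop.prems by simp
  then show ?case using Loop.IH(1)[OF Loop.prems] Loop.IH(2)[OF Loop.prems] by simp
qed auto

lemma wfe_shf_iff: "c \<le> k \<Longrightarrow> wfe (k + 2) (shf c e) = wfe k e"
  by (induction e arbitrary: c k) auto

lemma wfe_shf: "wfe k e \<Longrightarrow> c \<le> k \<Longrightarrow> wfe (k + 2) (shf c e)"
  using wfe_shf_iff by blast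

definition sh :: "exp \<Rightarrow> exp" where "sh = shf 0"

lemma ee_sh[simp]: "ee (a # b # env) (sh e) = ee env e"
  using ee_shf[of "[]" 0 a b env e] by (simp add: sh_def)

lemma wfe_sh[simp]: "wfe (k + 2) (sh e) = wfe k e"
  using wfe_shf_iff[of 0 k e] by (simp add: sh_def)

lemma wfe_sh'[simp]: "wfe (Suc (Suc k)) (sh e) = wfe k e"
  using wfe_sh by simp

lemma ee_V[simp]: "ee (a # env) (V 0) = a" "ee (a # b # env) (V 1) = b"
  "ee (a # b # env) (V (Suc (Suc i))) = ee env (V i)"
  by simp_all


lemma if10_simps[simp]: "(0 < (if P then 1 else (0::nat))) = P" "((if P then 1 else (0::nat)) \<noteq> 0) = P"
  "(0 < (if P then Suc 0 else (0::nat))) = P" "((if P then Suc 0 else (0::nat)) \<noteq> 0) = P"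
  by auto

definition "Eq a b = If (Plus (Minus a b) (Minus b a)) (Kn 0) (Kn 1)"
lemma Eq[simp]: "ee env (Eq a b) = (if ee env a = ee env b then 1 else 0)" "wfe k (Eq a b) \<longleftrightarrow> wfe k a \<and> wfe k b"
  by (auto simp: Eq_def)

definition "Tri e = Loop e (Kn 0) (Plus (V 1) (Plus (V 0) (Kn 1)))"
lemma Tri[simp]: "ee env (Tri e) = triangle (ee env e)" "wfe k (Tri e) \<longleftrightarrow> wfe k e"
proof -
  have "rec_nat 0 (\<lambda>n y. y + (n + 1)) m = triangle m" for m by (induction m) auto
  then show "ee env (Tri e) = triangle (ee env e)" by (simp add: Tri_def)
qed (simp add: Tri_def)

definition "Penc a b = Plus (Tri (Plus a b)) a"
lemma Penc[simp]: "ee env (Penc a b) = prod_encode (ee env a, ee env b)" "wfe k (Penc a b) \<longleftrightarrow> wfe k a \<and> wfe k b"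
  by (auto simp: Penc_def prod_encode_def)

definition "Sf e = Loop e (Kn 0) (If (Minus (Tri (Plus (V 1) (Kn 1))) (Plus (V 0) (Kn 1))) (V 1) (Plus (V 1) (Kn 1)))"

definition sfv :: "nat \<Rightarrow> nat" where
  "sfv z = rec_nat 0 (\<lambda>n y. if triangle (y + 1) - (n + 1) \<noteq> 0 then y else y + 1) z"

lemma Sf[simp]: "ee env (Sf e) = sfv (ee env e)" "wfe k (Sf e) \<longleftrightarrow> wfe k e"
  by (auto simp: Sf_def sfv_def cong: if_cong)

lemma sfv_inv: "triangle (sfv z) \<le> z \<and> z < triangle (Suc (sfv z))"
proof (induction z)
  case 0 then show ?case by (simp add: sfv_def)
next
  case (Suc z)
  have e: "sfv (Suc z) = (if triangle (sfv z + 1) - (z + 1) \<noteq> 0 then sfv z else sfv z + 1)"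
    by (simp add: sfv_def)
  show ?case
  proof (cases "triangle (sfv z + 1) - (z + 1) \<noteq> 0")
    case True then show ?thesis using Suc e by auto
  next
    case False
    then have "triangle (sfv z + 1) = z + 1" using Suc by auto
    then show ?thesis using e False by simp
  qed
qed

lemma prod_decode_sfv: "prod_decode z = (z - triangle (sfv z), sfv z - (z - triangle (sfv z)))"
proof -
  have i: "triangle (sfv z) \<le> z" "z < triangle (sfv z) + Suc (sfv z)" using sfv_inv[of z] by auto
  have "prod_encode (z - triangle (sfv z), sfv z - (z - triangle (sfv z))) = z"
    using i by (simp add: prod_encode_def)
  then show ?thesis by (metis prod_encode_inverse)
qed

definition "Pfst e = Minus e (Tri (Sf e))"
definition "Psnd e = Minus (Sf e) (Pfst e)"
lemma Pfst[simp]: "ee env (Pfst e) = fst (prod_decode (ee env e))" "wfe k (Pfst e) \<longleftrightarrow> wfe k e"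
  by (auto simp: Pfst_def prod_decode_sfv)
lemma Psnd[simp]: "ee env (Psnd e) = snd (prod_decode (ee env e))" "wfe k (Psnd e) \<longleftrightarrow> wfe k e"
  by (auto simp: Psnd_def prod_decode_sfv)

definition lhd :: "nat \<Rightarrow> nat" where "lhd l = fst (prod_decode (l - 1))"
definition ltl :: "nat \<Rightarrow> nat" where "ltl l = snd (prod_decode (l - 1))"

lemma lhd_ltl_cons[simp]: "lhd (Suc (prod_encode (x, y))) = x" "ltl (Suc (prod_encode (x, y))) = y"
  by (simp_all add: lhd_def ltl_def prod_encode_inverse)

lemma ltl0[simp]: "ltl 0 = 0"
  by (simp add: ltl_def prod_decode_def prod_decode_aux.simps)

lemma ltl_pow0[simp]: "(ltl ^^ i) 0 = 0"
  by (induction i) auto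


definition "Hd e = Pfst (Minus e (Kn 1))"
definition "Tl e = Psnd (Minus e (Kn 1))"
lemma Hd[simp]: "ee env (Hd e) = lhd (ee env e)" "wfe k (Hd e) \<longleftrightarrow> wfe k e"
  by (auto simp: Hd_def lhd_def)
lemma Tl[simp]: "ee env (Tl e) = ltl (ee env e)" "wfe k (Tl e) \<longleftrightarrow> wfe k e"
  by (auto simp: Tl_def ltl_def)

definition "Tlit i l = Loop i l (Tl (V 1))"
lemma Tlit[simp]: "ee env (Tlit i l) = (ltl ^^ (ee env i)) (ee env l)" "wfe k (Tlit i l) \<longleftrightarrow> wfe k i \<and> wfe k l"
proof -
  have "rec_nat a (\<lambda>n y. ltl y) m = (ltl ^^ m) a" for a m by (induction m) auto
  then show "ee env (Tlit i l) = (ltl ^^ (ee env i)) (ee env l)" by (simp add: Tlit_def)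
qed (auto simp: Tlit_def)

lemma ltl_pow: "(ltl ^^ i) (list_encode xs) = list_encode (drop i xs)"
proof (induction i arbitrary: xs)
  case (Suc i) then show ?case
    by (cases xs) (simp_all add: funpow_Suc_right del: funpow.simps)
qed simp

definition "Nth l i = Hd (Tlit i l)"
lemma Nth[simp]: "ee env (Nth l i) = lhd ((ltl ^^ (ee env i)) (ee env l))" "wfe k (Nth l i) \<longleftrightarrow> wfe k i \<and> wfe k l"
  by (auto simp: Nth_def)

lemma lhd_nth: "i < length xs \<Longrightarrow> lhd ((ltl ^^ i) (list_encode xs)) = xs ! i"
  by (simp add: ltl_pow Cons_nth_drop_Suc[symmetric])

definition "LCons h t = Plus (Penc h t) (Kn 1)"
lemma LCons[simp]: "ee env (LCons h t) = Suc (prod_encode (ee env h, ee env t))" "wfe k (LCons h t) \<longleftrightarrow> wfe k h \<and> wfe k t"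
  by (auto simp: LCons_def)

definition "Pow2 e = Loop e (Kn 1) (Times (Kn 2) (V 1))"
lemma Pow2[simp]: "ee env (Pow2 e) = 2 ^ (ee env e)" "wfe k (Pow2 e) \<longleftrightarrow> wfe k e"
proof -
  have "rec_nat 1 (\<lambda>n y. 2 * y) m = (2::nat) ^ m" for m by (induction m) auto
  then show "ee env (Pow2 e) = 2 ^ (ee env e)" by (simp add: Pow2_def)
qed (auto simp: Pow2_def)

definition "Mod x d = Loop x (Kn 0) (If (Eq (Plus (V 1) (Kn 1)) (sh d)) (Kn 0) (Plus (V 1) (Kn 1)))"
lemma Mod[simp]: "ee env d > 0 \<Longrightarrow> ee env (Mod x d) = ee env x mod ee env d" "wfe k (Mod x d) \<longleftrightarrow> wfe k x \<and> wfe k d"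
proof -
  assume d: "ee env d > 0"
  have "rec_nat 0 (\<lambda>n y. if y + 1 = D then 0 else y + 1) m = m mod D" if "D > 0" for m D :: nat
    using that by (induction m) (auto simp: mod_Suc)
  then show "ee env (Mod x d) = ee env x mod ee env d" using d
    by (simp add: Mod_def cong: if_cong)
next
  show "wfe k (Mod x d) \<longleftrightarrow> wfe k x \<and> wfe k d"
    by (auto simp: Mod_def)
qed


lemma Mod_total[simp]: "ee env (Mod x d) = ee env x mod ee env d"
proof -
  have "rec_nat 0 (\<lambda>n y. if y + 1 = D then 0 else y + 1) m = m mod D" for m D :: nat
    by (induction m) (auto simp: mod_Suc)
  then show ?thesis by (simp add: Mod_def cong: if_cong)
qed

definition "Div x d = Loop x (Kn 0) (Plus (V 1) (If (Mod (Plus (V 0) (Kn 1)) (sh d)) (Kn 0) (Kn 1)))"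
lemma Div[simp]: "ee env (Div x d) = ee env x div ee env d" "wfe k (Div x d) \<longleftrightarrow> wfe k x \<and> wfe k d"
proof -
  have "rec_nat 0 (\<lambda>n y. y + (if (n + 1) mod D \<noteq> 0 then 0 else 1)) m = m div D" for m D :: nat
    by (induction m) (auto simp: div_Suc)
  then show "ee env (Div x d) = ee env x div ee env d" by (simp add: Div_def cong: if_cong)
qed (auto simp: Div_def)

definition "Le a b = If (Minus a b) (Kn 0) (Kn 1)"
definition "Lt a b = If (Minus b a) (Kn 1) (Kn 0)"
lemma Le[simp]: "ee env (Le a b) = (if ee env a \<le> ee env b then 1 else 0)" "wfe k (Le a b) \<longleftrightarrow> wfe k a \<and> wfe k b"
  by (auto simp: Le_def)
lemma Lt[simp]: "ee env (Lt a b) = (if ee env a < ee env b then 1 else 0)" "wfe k (Lt a b) \<longleftrightarrow> wfe k a \<and> wfe k b"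
  by (auto simp: Lt_def)

definition "nN y = lhd y"
definition "mM y = lhd (ltl y)"
definition "iI y = lhd ((ltl ^^ 2) y)"
definition "tC y = lhd ((ltl ^^ 3) y)"
definition "rC y = lhd ((ltl ^^ 4) y)"
definition "kK y = tC y + 1"
definition "pP y = (2::nat) ^ kK y"
definition "bB y = nN y + rC y"
definition "sK y = bB y + nN y * mM y * pP y"

definition "NnE x = Nth x (Kn 0)"
definition "MmE x = Nth x (Kn 1)"
definition "IiE x = Nth x (Kn 2)"
definition "TcE x = Nth x (Kn 3)"
definition "RcE x = Nth x (Kn 4)"
definition "KkE x = Plus (TcE x) (Kn 1)"
definition "PpE x = Pow2 (KkE x)"
definition "BbE x = Plus (NnE x) (RcE x)"
definition "SkE x = Plus (BbE x) (Times (Times (NnE x) (MmE x)) (PpE x))"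

lemma params_ee[simp]:
  "ee env (NnE x) = nN (ee env x)" "ee env (MmE x) = mM (ee env x)" "ee env (IiE x) = iI (ee env x)"
  "ee env (TcE x) = tC (ee env x)" "ee env (RcE x) = rC (ee env x)" "ee env (KkE x) = kK (ee env x)"
  "ee env (PpE x) = pP (ee env x)" "ee env (BbE x) = bB (ee env x)" "ee env (SkE x) = sK (ee env x)"
  by (simp_all add: NnE_def MmE_def IiE_def TcE_def RcE_def KkE_def PpE_def BbE_def SkE_def
     nN_def mM_def iI_def tC_def rC_def kK_def pP_def bB_def sK_def numeral_eq_Suc)

lemma params_wfe[simp]:
  "wfe k (NnE x) = wfe k x" "wfe k (MmE x) = wfe k x" "wfe k (IiE x) = wfe k x"
  "wfe k (TcE x) = wfe k x" "wfe k (RcE x) = wfe k x" "wfe k (KkE x) = wfe k x"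
  "wfe k (PpE x) = wfe k x" "wfe k (BbE x) = wfe k x" "wfe k (SkE x) = wfe k x"
  by (simp_all add: NnE_def MmE_def IiE_def TcE_def RcE_def KkE_def PpE_def BbE_def SkE_def)

definition wC :: "nat \<Rightarrow> nat \<Rightarrow> nat \<Rightarrow> nat \<Rightarrow> nat" where
  "wC y q a ent = (if lhd ent = q then (if lhd (ltl ent) = a then
      lhd ((ltl ^^ 3) ent) * 2 ^ (kK y - lhd ((ltl ^^ 4) ent)) else 0) else 0)"

definition stepC :: "nat \<Rightarrow> nat \<Rightarrow> nat \<Rightarrow> nat \<Rightarrow> nat \<Rightarrow> nat \<Rightarrow> nat" where
  "stepC y q a v i st = (let L = (ltl ^^ i) (tC y); ent = lhd L in
     if L = 0 then st else
     if fst (prod_decode st) \<noteq> 0 then st else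
     if snd (prod_decode st) \<le> v \<and> v < snd (prod_decode st) + wC y q a ent
     then prod_encode (lhd ((ltl ^^ 2) ent) + 1, snd (prod_decode st))
     else prod_encode (0, snd (prod_decode st) + wC y q a ent))"

definition scanC :: "nat \<Rightarrow> nat \<Rightarrow> nat \<Rightarrow> nat \<Rightarrow> nat" where
  "scanC y q a v = rec_nat (prod_encode (0, 0)) (\<lambda>i st. stepC y q a v i st) (tC y)"

definition targC :: "nat \<Rightarrow> nat \<Rightarrow> nat \<Rightarrow> nat \<Rightarrow> nat" where
  "targC y q a v = (if fst (prod_decode (scanC y q a v)) \<noteq> 0 then fst (prod_decode (scanC y q a v)) - 1 else sK y)"

definition "WE x q a ent = If (Eq (Nth ent (Kn 0)) q) (If (Eq (Nth ent (Kn 1)) a)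
   (Times (Nth ent (Kn 3)) (Pow2 (Minus (KkE x) (Nth ent (Kn 4))))) (Kn 0)) (Kn 0)"

lemma WE[simp]: "ee env (WE x q a ent) = wC (ee env x) (ee env q) (ee env a) (ee env ent)"
  "wfe k (WE x q a ent) \<longleftrightarrow> wfe k x \<and> wfe k q \<and> wfe k a \<and> wfe k ent"
  by (auto simp: WE_def wC_def numeral_eq_Suc cong: if_cong)

definition "StepE x q a v =
  (let L = Tlit (V 0) (TcE (sh x)); ent = Hd L; st = V 1 in
   If (Eq L (Kn 0)) st
   (If (Pfst st) st
   (If (Le (Psnd st) (sh v)) (If (Lt (sh v) (Plus (Psnd st) (WE (sh x) (sh q) (sh a) ent)))
        (Penc (Plus (Nth ent (Kn 2)) (Kn 1)) (Psnd st))
        (Penc (Kn 0) (Plus (Psnd st) (WE (sh x) (sh q) (sh a) ent))))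
        (Penc (Kn 0) (Plus (Psnd st) (WE (sh x) (sh q) (sh a) ent))))))"

lemma StepE[simp]: "ee (i # st # env) (StepE x q a v) = stepC (ee env x) (ee env q) (ee env a) (ee env v) i st"
  by (simp add: StepE_def stepC_def Let_def numeral_eq_Suc cong: if_cong)

lemma StepE_wfe[simp]: "wfe k x \<Longrightarrow> wfe k q \<Longrightarrow> wfe k a \<Longrightarrow> wfe k v \<Longrightarrow> wfe (Suc (Suc k)) (StepE x q a v)"
  by (simp add: StepE_def Let_def)

definition "ScanE x q a v = Loop (TcE x) (Penc (Kn 0) (Kn 0)) (StepE x q a v)"
lemma ScanE[simp]: "ee env (ScanE x q a v) = scanC (ee env x) (ee env q) (ee env a) (ee env v)"
  "wfe k x \<Longrightarrow> wfe k q \<Longrightarrow> wfe k a \<Longrightarrow> wfe k v \<Longrightarrow> wfe k (ScanE x q a v)"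
  by (simp_all add: ScanE_def scanC_def)

definition "TargE x q a v = If (Pfst (ScanE x q a v)) (Minus (Pfst (ScanE x q a v)) (Kn 1)) (SkE x)"
lemma TargE[simp]: "ee env (TargE x q a v) = targC (ee env x) (ee env q) (ee env a) (ee env v)"
  "wfe k x \<Longrightarrow> wfe k q \<Longrightarrow> wfe k a \<Longrightarrow> wfe k v \<Longrightarrow> wfe k (TargE x q a v)"
  by (simp_all add: TargE_def targC_def)

definition extC :: "nat \<Rightarrow> nat \<Rightarrow> nat \<Rightarrow> nat \<Rightarrow> nat" where
  "extC y q a p = (if pP y \<le> p then targC y q a (p - pP y) else bB y + ((q * mM y + a) * pP y + p))"

definition "ExtE x q a p = If (Le (PpE x) p) (TargE x q a (Minus p (PpE x)))
   (Plus (BbE x) (Plus (Times (Plus (Times q (MmE x)) a) (PpE x)) p))"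
lemma ExtE[simp]: "ee env (ExtE x q a p) = extC (ee env x) (ee env q) (ee env a) (ee env p)"
  "wfe k x \<Longrightarrow> wfe k q \<Longrightarrow> wfe k a \<Longrightarrow> wfe k p \<Longrightarrow> wfe k (ExtE x q a p)"
  by (simp_all add: ExtE_def extC_def)

definition gC :: "nat \<Rightarrow> nat \<Rightarrow> nat \<Rightarrow> nat \<Rightarrow> nat" where
  "gC y s c b = (if s < nN y then (if c < mM y then extC y s c (2 + b) else sK y)
     else if bB y \<le> s \<and> s < sK y \<and> 2 \<le> (s - bB y) mod pP y \<and> c = mM y
     then extC y ((s - bB y) div pP y div mM y) ((s - bB y) div pP y mod mM y) (2 * ((s - bB y) mod pP y) + b)
     else sK y)"

definition "GE x s c b =
  (let d = Minus s (BbE x); pp = Mod d (PpE x); qa = Div d (PpE x) in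
   If (Lt s (NnE x)) (If (Lt c (MmE x)) (ExtE x s c (Plus (Kn 2) b)) (SkE x))
   (If (Le (BbE x) s) (If (Lt s (SkE x)) (If (Le (Kn 2) pp) (If (Eq c (MmE x))
      (ExtE x (Div qa (MmE x)) (Mod qa (MmE x)) (Plus (Times (Kn 2) pp) b))
      (SkE x)) (SkE x)) (SkE x)) (SkE x)))"

lemma GE[simp]: "ee env (GE x s c b) = gC (ee env x) (ee env s) (ee env c) (ee env b)"
  by (simp add: GE_def gC_def Let_def cong: if_cong)

lemma GE_wfe[simp]: "wfe k x \<Longrightarrow> wfe k s \<Longrightarrow> wfe k c \<Longrightarrow> wfe k b \<Longrightarrow> wfe k (GE x s c b)"
  by (simp add: GE_def Let_def)

definition "nP y = sK y + 1"
definition "mP y = mM y + 1"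
definition "sIdx y k = k div (2 * mP y)"
definition "cIdx y k = k div 2 mod mP y"
definition "bIdx (k::nat) = k mod 2"
definition "entC y k = list_encode [sIdx y k, cIdx y k, gC y (sIdx y k) (cIdx y k) (bIdx k), 1, 1]"
definition "tP y = list_encode (rev (map (entC y) [0..<nP y * mP y * 2]))"
definition "progC y = list_encode [nP y, mP y, iI y, tP y, rC y]"

definition "L5 a b c d e = LCons a (LCons b (LCons c (LCons d (LCons e (Kn 0)))))"
lemma L5[simp]: "ee env (L5 a b c d e) = list_encode [ee env a, ee env b, ee env c, ee env d, ee env e]"
  "wfe k (L5 a b c d e) \<longleftrightarrow> wfe k a \<and> wfe k b \<and> wfe k c \<and> wfe k d \<and> wfe k e"
  by (auto simp: L5_def)

definition "EntE x k = (let m1 = Plus (MmE x) (Kn 1); s = Div k (Times (Kn 2) m1);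
   c = Mod (Div k (Kn 2)) m1; b = Mod k (Kn 2) in L5 s c (GE x s c b) (Kn 1) (Kn 1))"
lemma EntE[simp]: "ee env (EntE x k) = entC (ee env x) (ee env k)"
  "wfe j x \<Longrightarrow> wfe j k \<Longrightarrow> wfe j (EntE x k)"
  by (simp_all add: EntE_def entC_def Let_def sIdx_def cIdx_def bIdx_def mP_def)

definition "ProgE = (let x = V 0; n1 = Plus (SkE x) (Kn 1); m1 = Plus (MmE x) (Kn 1) in
   L5 n1 m1 (IiE x) (Loop (Times (Times n1 m1) (Kn 2)) (Kn 0) (LCons (EntE (sh x) (V 0)) (V 1))) (RcE x))"

lemma loop_list: "rec_nat 0 (\<lambda>k acc. Suc (prod_encode (f k, acc))) N = list_encode (rev (map f [0..<N]))"
  by (induction N) auto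

lemma ProgE: "ee [y] ProgE = progC y" "wfe 1 ProgE"
  by (simp_all add: ProgE_def Let_def progC_def tP_def nP_def mP_def loop_list)

theorem prog_rec: "rec_eval (cmp 1 ProgE) [y] (progC y)"
  using cmp_rec_eval[of ProgE y] ProgE by simp


lemma lt_list_encode: "x \<in> set xs \<Longrightarrow> x < list_encode xs"
proof (induction xs)
  case (Cons y ys)
  then show ?case using le_prod_encode_1[of y "list_encode ys"] le_prod_encode_2[of "list_encode ys" y]
    by auto
qed simp

lemma length_le_list_encode: "length xs \<le> list_encode xs"
proof (induction xs)
  case (Cons y ys)
  then show ?case using le_prod_encode_2[of "list_encode ys" y] by auto
qed simp

definition enc5 :: "nat \<times> nat \<times> nat \<times> nat \<times> nat \<Rightarrow> nat" where
  "enc5 = (\<lambda>(q, a, p, u, e). list_encode [q, a, p, u, e])"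

definition "Tcode D = list_encode (map enc5 (c_trans D))"
definition "Rcode D = list_encode (map (\<lambda>(al, be). prod_encode (list_encode al, list_encode be)) (c_rabin D))"

lemma encode_code_alt: "encode_code D = list_encode [c_nstates D, c_nletters D, c_init D, Tcode D, Rcode D]"
  by (simp add: encode_code_def Tcode_def Rcode_def enc5_def)

lemma params_code[simp]:
  "nN (encode_code D) = c_nstates D" "mM (encode_code D) = c_nletters D" "iI (encode_code D) = c_init D"
  "tC (encode_code D) = Tcode D" "rC (encode_code D) = Rcode D"
  by (simp_all add: encode_code_alt nN_def mM_def iI_def tC_def rC_def numeral_eq_Suc)

definition wt :: "nat \<Rightarrow> nat \<Rightarrow> nat \<Rightarrow> nat \<times> nat \<times> nat \<times> nat \<times> nat \<Rightarrow> nat" where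
  "wt K q a t = (case t of (q', a', p', u, e) \<Rightarrow> if q' = q \<and> a' = a then u * 2 ^ (K - e) else 0)"

definition tgt :: "nat \<times> nat \<times> nat \<times> nat \<times> nat \<Rightarrow> nat" where
  "tgt t = (case t of (q', a', p', u, e) \<Rightarrow> p')"

definition stp :: "nat \<Rightarrow> nat \<Rightarrow> nat \<Rightarrow> nat \<Rightarrow> nat \<times> nat \<Rightarrow> nat \<times> nat \<times> nat \<times> nat \<times> nat \<Rightarrow> nat \<times> nat" where
  "stp K q a v st t = (if fst st \<noteq> 0 then st else
     if snd st \<le> v \<and> v < snd st + wt K q a t then (tgt t + 1, snd st) else (0, snd st + wt K q a t))"

lemma wC_enc5[simp]: "wC y q a (enc5 t) = wt (kK y) q a t"
  by (cases t) (simp add: wC_def enc5_def wt_def numeral_eq_Suc)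

lemma lhd2_enc5[simp]: "lhd ((ltl ^^ 2) (enc5 t)) = tgt t"
  by (cases t) (simp add: enc5_def tgt_def numeral_eq_Suc)

lemma enc5_nz[simp]: "enc5 t \<noteq> 0"
  by (cases t) (simp add: enc5_def)

lemma stepC_enc: "(ltl ^^ i) (tC y) = Suc (prod_encode (enc5 t, rest)) \<Longrightarrow>
  stepC y q a v i (prod_encode st) = prod_encode (stp (kK y) q a v st t)"
  by (cases st) (simp add: stepC_def stp_def prod_encode_inverse Let_def)

lemma scanC_fold:
  assumes "y = encode_code D"
  shows "rec_nat (prod_encode (0, 0)) (\<lambda>i st. stepC y q a v i st) i =
    prod_encode (foldl (stp (kK y) q a v) (0, 0) (take i (c_trans D)))"
proof (induction i)
  case 0 then show ?case by simp
next
  case (Suc i)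
  have L: "(ltl ^^ i) (tC y) = list_encode (drop i (map enc5 (c_trans D)))"
    using assms by (simp add: Tcode_def ltl_pow)
  show ?case
  proof (cases "i < length (c_trans D)")
    case True
    have d: "drop i (map enc5 (c_trans D)) = enc5 (c_trans D ! i) # drop (Suc i) (map enc5 (c_trans D))"
      using True by (metis Cons_nth_drop_Suc length_map nth_map)
    have t: "take (Suc i) (c_trans D) = take i (c_trans D) @ [c_trans D ! i]"
      using True by (simp add: take_Suc_conv_app_nth)
    have L2: "(ltl ^^ i) (tC y) = Suc (prod_encode (enc5 (c_trans D ! i), list_encode (drop (Suc i) (map enc5 (c_trans D)))))"
      using L d by simp
    show ?thesis using Suc.IH t stepC_enc[OF L2] by simp
  next
    case False
    then show ?thesis using Suc L by (simp add: stepC_def)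
  qed
qed

definition sel :: "nat \<Rightarrow> nat \<Rightarrow> nat \<Rightarrow> nat \<Rightarrow> nat \<Rightarrow> (nat \<times> nat \<times> nat \<times> nat \<times> nat) list \<Rightarrow> nat" where
  "sel K q a v c ts = fst (foldl (stp K q a v) (0, c) ts)"

lemma foldl_stp_found: "fst st \<noteq> 0 \<Longrightarrow> foldl (stp K q a v) st ts = st"
  by (induction ts) (auto simp: stp_def)

lemma sel_Nil[simp]: "sel K q a v c [] = 0"
  by (simp add: sel_def)

lemma sel_Cons: "sel K q a v c (t # ts) =
   (if c \<le> v \<and> v < c + wt K q a t then tgt t + 1 else sel K q a v (c + wt K q a t) ts)"
  by (simp add: sel_def stp_def foldl_stp_found)

definition "W K q a ts = sum_list (map (wt K q a) ts)"

lemma sel_out: "v < c \<or> c + W K q a ts \<le> v \<Longrightarrow> sel K q a v c ts = 0"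
  by (induction ts arbitrary: c) (auto simp: sel_Cons W_def)

lemma sel_in: "c \<le> v \<Longrightarrow> v < c + W K q a ts \<Longrightarrow>
   \<exists>t\<in>set ts. wt K q a t > 0 \<and> sel K q a v c ts = tgt t + 1"
proof (induction ts arbitrary: c)
  case Nil then show ?case by (simp add: W_def)
next
  case (Cons t ts)
  show ?case
  proof (cases "v < c + wt K q a t")
    case True then show ?thesis using Cons.prems by (auto simp: sel_Cons)
  next
    case False
    then have "\<exists>t'\<in>set ts. wt K q a t' > 0 \<and> sel K q a v (c + wt K q a t) ts = tgt t' + 1"
      using Cons.prems by (intro Cons.IH) (auto simp: W_def)
    then show ?thesis using False by (auto simp: sel_Cons)
  qed
qed

lemma sel_count: "card {v. c \<le> v \<and> v < c + W K q a ts \<and> sel K q a v c ts = Suc p} =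
   sum_list (map (\<lambda>t. if tgt t = p then wt K q a t else 0) ts)"
proof (induction ts arbitrary: c)
  case Nil then show ?case by (simp add: W_def)
next
  case (Cons t ts)
  let ?w = "wt K q a t"
  have split: "{v. c \<le> v \<and> v < c + W K q a (t # ts) \<and> sel K q a v c (t # ts) = Suc p} =
     {v. c \<le> v \<and> v < c + ?w \<and> tgt t = p} \<union>
     {v. c + ?w \<le> v \<and> v < c + ?w + W K q a ts \<and> sel K q a v (c + ?w) ts = Suc p}"
    by (auto simp: sel_Cons W_def)
  have "card (\<dots>) = card {v. c \<le> v \<and> v < c + ?w \<and> tgt t = p} +
     card {v. c + ?w \<le> v \<and> v < c + ?w + W K q a ts \<and> sel K q a v (c + ?w) ts = Suc p}"
    by (rule card_Un_disjoint) auto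
  moreover have "card {v. c \<le> v \<and> v < c + ?w \<and> tgt t = p} = (if tgt t = p then ?w else 0)"
  proof -
    have "{v. c \<le> v \<and> v < c + ?w} = {c..<c + ?w}" by auto
    then show ?thesis by auto
  qed
  ultimately show ?case using Cons.IH[of "c + ?w"] split by simp
qed

lemma targC_sel:
  assumes "y = encode_code D"
  shows "targC y q a v = (if sel (kK y) q a v 0 (c_trans D) \<noteq> 0 then sel (kK y) q a v 0 (c_trans D) - 1 else sK y)"
proof -
  have "length (c_trans D) \<le> tC y"
    using assms length_le_list_encode[of "map enc5 (c_trans D)"] by (simp add: Tcode_def)
  then have "scanC y q a v = prod_encode (foldl (stp (kK y) q a v) (0, 0) (c_trans D))"
    using scanC_fold[OF assms, of q a v "tC y"] by (simp add: scanC_def)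
  then show ?thesis by (simp add: targC_def sel_def prod_encode_inverse)
qed


definition eE :: "nat \<times> nat \<times> nat \<times> nat \<times> nat \<Rightarrow> nat" where
  "eE t = (case t of (q', a', p', u, e) \<Rightarrow> e)"

lemma eE_bound:
  assumes "t \<in> set (c_trans D)"
  shows "eE t < kK (encode_code D)"
proof -
  obtain q a p u e where t: "t = (q, a, p, u, e)" by (cases t) auto
  have "enc5 t \<in> set (map enc5 (c_trans D))" using assms by simp
  then have "enc5 t < Tcode D" unfolding Tcode_def by (rule lt_list_encode)
  moreover have "e < list_encode [q, a, p, u, e]" by (rule lt_list_encode) simp
  then have "e < enc5 t" by (simp add: t enc5_def)
  ultimately show ?thesis by (simp add: kK_def t eE_def)
qed

definition trl :: "(nat \<times> nat \<times> nat \<times> nat \<times> nat) list \<Rightarrow> nat \<Rightarrow> nat \<Rightarrow> nat \<Rightarrow> real" where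
  "trl ts q a p = (\<Sum>(q', a', p', u, e) \<leftarrow> ts. if (q', a', p') = (q, a, p) then real u / 2 ^ e else 0)"

lemma trans_aut_of: "trans (aut_of D) = trl (c_trans D)"
  by (simp add: aut_of_def trl_def fun_eq_iff)

lemma trl_wt:
  assumes "\<forall>t\<in>set ts. eE t \<le> K"
  shows "real (\<Sum>t\<leftarrow>ts. if tgt t = p then wt K q a t else 0) = 2 ^ K * trl ts q a p"
  using assms
proof (induction ts)
  case Nil then show ?case by (simp add: trl_def)
next
  case (Cons t ts)
  obtain q' a' p' u e where t: "t = (q', a', p', u, e)" by (cases t) auto
  have eK: "e \<le> K" using Cons.prems t by (simp add: eE_def)
  have "real (u * 2 ^ (K - e)) = real u * (2::real) ^ (K - e)" by simp
  also have "\<dots> = real u * (2 ^ K / 2 ^ e)" using eK by (simp add: power_diff)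
  also have "\<dots> = 2 ^ K * (real u / 2 ^ e)" by simp
  finally have "real (u * 2 ^ (K - e)) = 2 ^ K * (real u / 2 ^ e)" .
  then show ?case using Cons by (auto simp: t trl_def tgt_def wt_def algebra_simps)
qed

lemma trl_nonneg: "trl ts q a p \<ge> 0"
  unfolding trl_def by (induction ts) auto

lemma trl_ge_term: "t \<in> set ts \<Longrightarrow> t = (q, a, p, u, e) \<Longrightarrow> trl ts q a p \<ge> real u / 2 ^ e"
proof (induction ts)
  case (Cons t' ts)
  show ?case
  proof (cases "t' = t")
    case True
    have "trl ts q a p \<ge> 0" by (rule trl_nonneg)
    then show ?thesis using True Cons.prems by (simp add: trl_def)
  next
    case False
    then have "trl ts q a p \<ge> real u / 2 ^ e" using Cons by auto
    moreover obtain q' a' p' u' e' where t': "t' = (q', a', p', u', e')" by (cases t') auto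
    ultimately show ?thesis by (auto simp: trl_def t' intro!: add_increasing)
  qed
qed simp

lemma sum_list_sum_swap: "(\<Sum>t\<leftarrow>ts. \<Sum>p\<in>A. f t p) = (\<Sum>p\<in>A. \<Sum>t\<leftarrow>ts. f t p)"
  by (induction ts) (simp_all add: sum.distrib)

locale wfD =
  fixes D :: pra_code
  assumes wf: "wf_pra (aut_of D)"
begin

abbreviation "y \<equiv> encode_code D"
abbreviation "n \<equiv> c_nstates D"
abbreviation "m \<equiv> c_nletters D"
abbreviation "K \<equiv> kK y"
abbreviation "Ts \<equiv> c_trans D"

lemma eK: "t \<in> set Ts \<Longrightarrow> eE t \<le> K"
  using eE_bound[of t D] by simp

lemma trans_eq: "real (\<Sum>t\<leftarrow>Ts. if tgt t = p then wt K q a t else 0) = 2 ^ K * trans (aut_of D) q a p"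
  using trl_wt[of Ts K p q a] eK by (simp add: trans_aut_of)

lemma wf_parts: "q < n \<Longrightarrow> a < m \<Longrightarrow> (\<forall>p. trans (aut_of D) q a p \<ge> 0 \<and> (p \<ge> n \<longrightarrow> trans (aut_of D) q a p = 0))
   \<and> (\<Sum>p<n. trans (aut_of D) q a p) = 1"
  using wf by (auto simp: wf_pra_def aut_of_def)

lemma init_lt: "c_init D < n"
  using wf by (simp add: wf_pra_def aut_of_def)

lemma wt_pos_tgt:
  assumes "q < n" "a < m" "t \<in> set Ts" "wt K q a t > 0"
  shows "tgt t < n"
proof (rule ccontr)
  assume c: "\<not> tgt t < n"
  obtain q' a' p' u e where t: "t = (q', a', p', u, e)" by (cases t) auto
  have m: "q' = q" "a' = a" "u > 0" using assms(4) by (auto simp: t wt_def split: if_splits)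
  have "trl Ts q a p' \<ge> real u / 2 ^ e" using trl_ge_term[OF assms(3)] t m by simp
  moreover have "real u / 2 ^ e > 0" using m by simp
  moreover have "trans (aut_of D) q a p' = 0" using wf_parts[OF assms(1,2)] c by (simp add: t tgt_def)
  ultimately show False by (simp add: trans_aut_of)
qed

lemma W_eq:
  assumes "q < n" "a < m"
  shows "W K q a Ts = 2 ^ K"
proof -
  have "(\<Sum>t\<leftarrow>Ts. wt K q a t) = (\<Sum>t\<leftarrow>Ts. \<Sum>p<n. if tgt t = p then wt K q a t else 0)"
  proof (rule arg_cong[where f = sum_list], rule map_cong[OF refl])
    fix t assume t: "t \<in> set Ts"
    show "wt K q a t = (\<Sum>p<n. if tgt t = p then wt K q a t else 0)"
    proof (cases "wt K q a t > 0")
      case True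
      then have "tgt t < n" using wt_pos_tgt assms t by blast
      then show ?thesis by (simp add: sum.delta)
    next
      case False then show ?thesis by simp
    qed
  qed
  also have "\<dots> = (\<Sum>p<n. \<Sum>t\<leftarrow>Ts. if tgt t = p then wt K q a t else 0)"
    by (rule sum_list_sum_swap)
  finally have "real (W K q a Ts) = (\<Sum>p<n. real (\<Sum>t\<leftarrow>Ts. if tgt t = p then wt K q a t else 0))"
    by (simp add: W_def)
  also have "\<dots> = (\<Sum>p<n. 2 ^ K * trans (aut_of D) q a p)" using trans_eq by simp
  also have "\<dots> = 2 ^ K" using wf_parts[OF assms] by (simp add: sum_distrib_left[symmetric])
  finally show ?thesis by (metis of_nat_eq_iff of_nat_numeral of_nat_power)
qed

lemma targ_lt:
  assumes "q < n" "a < m" "v < 2 ^ K"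
  shows "targC y q a v < n"
proof -
  obtain t where t: "t \<in> set Ts" "wt K q a t > 0" "sel K q a v 0 Ts = tgt t + 1"
    using sel_in[of 0 v K q a Ts] W_eq[OF assms(1,2)] assms(3) by auto
  then show ?thesis using targC_sel[of y D q a v] wt_pos_tgt[OF assms(1,2) t(1,2)] by simp
qed

lemma targ_count:
  assumes "q < n" "a < m" "p < n"
  shows "real (card {v. v < 2 ^ K \<and> targC y q a v = p}) = 2 ^ K * trans (aut_of D) q a p"
proof -
  have "{v. v < 2 ^ K \<and> targC y q a v = p} = {v. 0 \<le> v \<and> v < 0 + W K q a Ts \<and> sel K q a v 0 Ts = Suc p}"
  proof (intro set_eqI iffI)
    fix v assume v: "v \<in> {v. v < 2 ^ K \<and> targC y q a v = p}"
    obtain t where t: "t \<in> set Ts" "wt K q a t > 0" "sel K q a v 0 Ts = tgt t + 1"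
      using sel_in[of 0 v K q a Ts] W_eq[OF assms(1,2)] v by auto
    then show "v \<in> {v. 0 \<le> v \<and> v < 0 + W K q a Ts \<and> sel K q a v 0 Ts = Suc p}"
      using v targC_sel[of y D q a v] W_eq[OF assms(1,2)] by auto
  next
    fix v assume v: "v \<in> {v. 0 \<le> v \<and> v < 0 + W K q a Ts \<and> sel K q a v 0 Ts = Suc p}"
    then show "v \<in> {v. v < 2 ^ K \<and> targC y q a v = p}"
      using targC_sel[of y D q a v] W_eq[OF assms(1,2)] by auto
  qed
  then show ?thesis using sel_count[of 0 K q a Ts p] trans_eq by simp
qed

end


definition "icC y q a p = bB y + ((q * mM y + a) * pP y + p)"

definition entP :: "nat \<Rightarrow> nat \<Rightarrow> nat \<times> nat \<times> nat \<times> nat \<times> nat" where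
  "entP y k = (sIdx y k, cIdx y k, gC y (sIdx y k) (cIdx y k) (bIdx k), 1, 1)"

definition cD' :: "pra_code \<Rightarrow> pra_code" where
  "cD' D = (let y = encode_code D in
     PraCode (nP y) (mP y) (c_init D) (rev (map (entP y) [0..<nP y * mP y * 2])) (c_rabin D))"

lemma encode_cD': "encode_code (cD' D) = progC (encode_code D)"
proof -
  define y where "y = encode_code D"
  have c: "cD' D = PraCode (nP y) (mP y) (c_init D) (rev (map (entP y) [0..<nP y * mP y * 2])) (c_rabin D)"
    by (simp add: cD'_def y_def Let_def)
  have "map enc5 (rev (map (entP y) L)) = rev (map (entC y) L)" for L
    by (simp add: rev_map entP_def entC_def enc5_def)
  then have t: "Tcode (cD' D) = tP y" by (simp add: c Tcode_def tP_def)
  have r: "Rcode (cD' D) = Rcode D" by (simp add: c Rcode_def)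
  have "encode_code (cD' D) = list_encode [nP y, mP y, c_init D, tP y, Rcode D]"
    unfolding encode_code_alt t r by (simp add: c)
  also have "\<dots> = progC y" by (simp add: progC_def y_def)
  finally show ?thesis by (simp add: y_def)
qed

lemma cD'_rec: "rec_eval (cmp 1 ProgE) [encode_code D] (encode_code (cD' D))"
  using prog_rec[of "encode_code D"] by (simp add: encode_cD')

context wfD
begin

abbreviation "P \<equiv> pP y"
abbreviation "B \<equiv> bB y"
abbreviation "S \<equiv> sK y"
abbreviation "ic \<equiv> icC y"

lemma K_pos: "K \<ge> 1" by (simp add: kK_def)
lemma P_eq: "P = 2 ^ K" by (simp add: pP_def)
lemma P_ge2: "P \<ge> 2"
proof -
  have "(2::nat) ^ 1 \<le> 2 ^ K" using K_pos by (intro power_increasing) auto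
  then show ?thesis by (simp add: P_eq)
qed

lemma B_eq: "B = n + Rcode D" by (simp add: bB_def)
lemma S_eq: "S = B + n * m * P" by (simp add: sK_def)

lemma ic_bounds:
  assumes "q < n" "a < m" "p < P"
  shows "B \<le> ic q a p" "ic q a p < S"
proof -
  show "B \<le> ic q a p" by (simp add: icC_def)
  have "q * m + a < n * m"
  proof -
    have "q * m + a < q * m + m" using assms by simp
    also have "\<dots> = (q + 1) * m" by simp
    also have "\<dots> \<le> n * m" using assms by (intro mult_right_mono) auto
    finally show ?thesis .
  qed
  then have "q * m + a + 1 \<le> n * m" by simp
  then have "(q * m + a + 1) * P \<le> n * m * P" by (rule mult_right_mono) simp
  then have "(q * m + a) * P + p < n * m * P" using assms(3) by (simp add: algebra_simps)
  then show "ic q a p < S" by (simp add: icC_def S_eq)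
qed

lemma g_orig: "q < n \<Longrightarrow> a < m \<Longrightarrow> gC y q a b = extC y q a (2 + b)"
  by (simp add: gC_def)

lemma g_orig_bad: "q < n \<Longrightarrow> \<not> c < m \<Longrightarrow> gC y q c b = S"
  by (simp add: gC_def)

lemma ext_eq: "extC y q a p = (if P \<le> p then targC y q a (p - P) else ic q a p)"
  by (simp add: extC_def icC_def)

lemma ic_decode:
  assumes "q < n" "a < m" "p < P"
  shows "(ic q a p - B) mod P = p" "(ic q a p - B) div P div m = q" "(ic q a p - B) div P mod m = a"
proof -
  have d: "ic q a p - B = (q * m + a) * P + p" by (simp add: icC_def)
  show "(ic q a p - B) mod P = p" using assms by (simp add: d)
  have "(ic q a p - B) div P = q * m + a" using assms by (simp add: d)
  then show "(ic q a p - B) div P div m = q" "(ic q a p - B) div P mod m = a" using assms by auto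
qed

lemma n_le_B: "n \<le> B" by (simp add: B_eq)

lemma g_int:
  assumes "q < n" "a < m" "2 \<le> p" "p < P"
  shows "gC y (ic q a p) m b = extC y q a (2 * p + b)"
  using ic_bounds[OF assms(1,2,4)] ic_decode[OF assms(1,2,4)] assms n_le_B
  unfolding gC_def by auto

lemma g_int_bad:
  assumes "q < n" "a < m" "p < P" "c \<noteq> m"
  shows "gC y (ic q a p) c b = S"
  using ic_bounds[OF assms(1,2,3)] assms n_le_B unfolding gC_def by auto

lemma g_sink: "gC y S c b = S"
  using n_le_B by (simp add: gC_def S_eq)

lemma g_range:
  assumes "s \<le> S" "b \<le> 1"
  shows "gC y s c b \<le> S"
proof -
  have ext_ok: "extC y q a p \<le> S" if "q < n" "a < m" "p < 2 * P" for q a p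
  proof (cases "P \<le> p")
    case True
    then have "targC y q a (p - P) < n" using that by (intro targ_lt) (auto simp: P_eq)
    then show ?thesis using True n_le_B by (simp add: ext_eq S_eq)
  next
    case False
    then show ?thesis using ic_bounds[OF that(1,2), of p] by (simp add: ext_eq)
  qed
  show ?thesis
  proof (cases "s < n")
    case True
    then show ?thesis using ext_ok[of s c "2 + b"] assms P_ge2 by (auto simp: gC_def)
  next
    case False
    show ?thesis
    proof (cases "B \<le> s \<and> s < S \<and> 2 \<le> (s - B) mod P \<and> c = m")
      case True
      have mpos: "n * m * P > 0" using True S_eq by linarith
      then have m0: "m > 0" by simp
      have "s - B < n * m * P" using True S_eq by linarith
      then have "(s - B) div P < n * m" using mpos by (simp add: less_mult_imp_div_less)
      then have q: "(s - B) div P div m < n" using m0 by (simp add: div_less_iff_less_mult mult.commute)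
      have a: "(s - B) div P mod m < m" using m0 by simp
      have "(s - B) mod P < P" using P_ge2 by simp
      then have "2 * ((s - B) mod P) + b < 2 * P" using assms by simp
      then show ?thesis using True False ext_ok[OF q a] by (simp add: gC_def)
    next
      case c: False
      have "gC y s c b = S" unfolding gC_def params_code using False c by (simp only: if_False if_not_P)
      then show ?thesis by simp
    qed
  qed
qed

lemma mP_eq: "mP y = m + 1" by (simp add: mP_def)
lemma nP_eq: "nP y = S + 1" by (simp add: nP_def)

lemma idx_char:
  assumes "c < mP y"
  shows "(sIdx y k = s \<and> cIdx y k = c) \<longleftrightarrow> k div 2 = s * mP y + c"
proof -
  have d: "k div (2 * mP y) = k div 2 div mP y" by (simp add: div_mult2_eq)
  show ?thesis
  proof
    assume "sIdx y k = s \<and> cIdx y k = c"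
    then have "k div 2 div mP y = s" "k div 2 mod mP y = c" using d by (auto simp: sIdx_def cIdx_def)
    then show "k div 2 = s * mP y + c" by (metis div_mult_mod_eq)
  next
    assume h: "k div 2 = s * mP y + c"
    have "mP y > 0" using assms by simp
    have "k div 2 div mP y = s" unfolding h using assms by simp
    moreover have "k div 2 mod mP y = c" unfolding h using assms by simp
    ultimately have "k div 2 div mP y = s" "k div 2 mod mP y = c" by auto
    then show "sIdx y k = s \<and> cIdx y k = c" using d by (simp add: sIdx_def cIdx_def)
  qed
qed

lemma trl_rev: "trl (rev ts) q a p = trl ts q a p"
  unfolding trl_def by (simp only: rev_map[symmetric] sum_list_rev)

end


context wfD
begin

lemma trans_cD':
  assumes "s < nP y" "c < mP y"
  shows "trans (aut_of (cD' D)) s c t =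
    (if gC y s c 0 = t then 1/2 else 0) + (if gC y s c 1 = t then 1/2 else 0)"
proof -
  let ?N = "nP y * mP y * 2"
  let ?f = "\<lambda>k. if (sIdx y k, cIdx y k, gC y (sIdx y k) (cIdx y k) (bIdx k)) = (s, c, t) then (1::real) / 2 else 0"
  let ?k0 = "2 * (s * mP y + c)"
  have tr: "trans (aut_of (cD' D)) s c t = (\<Sum>k\<leftarrow>[0..<?N]. ?f k)"
  proof -
    have ct: "c_trans (cD' D) = rev (map (entP y) [0..<?N])" by (simp add: cD'_def Let_def)
    have "trl (map (entP y) L) s c t = (\<Sum>k\<leftarrow>L. ?f k)" for L
      by (simp add: trl_def entP_def comp_def cong: if_cong)
    then show ?thesis unfolding trans_aut_of ct trl_rev by blast
  qed
  also have "\<dots> = (\<Sum>k\<in>{0..<?N}. ?f k)" using sum_set_upt_conv_sum_list_nat[of ?f 0 ?N] by simp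
  also have "\<dots> = (\<Sum>k\<in>{?k0, Suc ?k0}. ?f k)"
  proof (rule sum.mono_neutral_right)
    have "s * mP y + c < nP y * mP y"
    proof -
      have "s * mP y + c < s * mP y + mP y" using assms by simp
      also have "\<dots> = (s + 1) * mP y" by simp
      also have "\<dots> \<le> nP y * mP y" using assms by (intro mult_right_mono) auto
      finally show ?thesis .
    qed
    then show "{?k0, Suc ?k0} \<subseteq> {0..<?N}" by auto
    show "\<forall>k\<in>{0..<?N} - {?k0, Suc ?k0}. ?f k = 0"
    proof
      fix k assume k: "k \<in> {0..<?N} - {?k0, Suc ?k0}"
      have "k div 2 \<noteq> s * mP y + c" using k by auto
      then show "?f k = 0" using idx_char[OF assms(2)] by auto
    qed
  qed simp
  also have "\<dots> = ?f ?k0 + ?f (Suc ?k0)" by simp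
  also have "\<dots> = (if gC y s c 0 = t then 1/2 else 0) + (if gC y s c 1 = t then 1/2 else 0)"
  proof -
    have "?k0 div 2 = s * mP y + c" "Suc ?k0 div 2 = s * mP y + c" by simp_all
    then have "sIdx y ?k0 = s \<and> cIdx y ?k0 = c" "sIdx y (Suc ?k0) = s \<and> cIdx y (Suc ?k0) = c"
      using idx_char[OF assms(2)] by blast+
    moreover have "bIdx ?k0 = 0" "bIdx (Suc ?k0) = 1" by (simp_all add: bIdx_def)
    ultimately show ?thesis by simp
  qed
  finally show ?thesis .
qed

lemma states_cD'[simp]: "states (aut_of (cD' D)) = {..<S + 1}"
  by (simp add: aut_of_def cD'_def Let_def nP_def)
lemma alphabet_cD'[simp]: "alphabet (aut_of (cD' D)) = {..<m + 1}"
  by (simp add: aut_of_def cD'_def Let_def mP_def)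
lemma initial_cD'[simp]: "initial (aut_of (cD' D)) = c_init D"
  by (simp add: aut_of_def cD'_def Let_def)
lemma pairs_cD'[simp]: "pairs (aut_of (cD' D)) = pairs (aut_of D)"
  by (simp add: aut_of_def cD'_def Let_def)

lemma wf_cD': "wf_pra (aut_of (cD' D))"
proof -
  have g: "gC y s c b < S + 1" if "s < S + 1" "b \<le> 1" for s c b
    using g_range[of s b c] that by simp
  show ?thesis
    unfolding wf_pra_def
  proof (intro conjI ballI allI impI)
    show "finite (states (aut_of (cD' D)))" by simp
    show "finite (alphabet (aut_of (cD' D)))" by simp
    show "initial (aut_of (cD' D)) \<in> states (aut_of (cD' D))"
      using init_lt n_le_B by (simp add: S_eq)
  next
    fix q a p assume q: "q \<in> states (aut_of (cD' D))" and a: "a \<in> alphabet (aut_of (cD' D))"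
    then have qa: "q < nP y" "a < mP y" by (auto simp: nP_eq mP_eq)
    show "trans (aut_of (cD' D)) q a p \<ge> 0" using trans_cD'[OF qa] by simp
  next
    fix q a p assume q: "q \<in> states (aut_of (cD' D))" and a: "a \<in> alphabet (aut_of (cD' D))"
      and p: "p \<notin> states (aut_of (cD' D))"
    then have qa: "q < nP y" "a < mP y" by (auto simp: nP_eq mP_eq)
    have "gC y q a 0 \<noteq> p" "gC y q a 1 \<noteq> p" using g[of q 0 a] g[of q 1 a] q p by auto
    then show "trans (aut_of (cD' D)) q a p = 0" by (simp add: trans_cD'[OF qa])
  next
    fix q a assume q: "q \<in> states (aut_of (cD' D))" and a: "a \<in> alphabet (aut_of (cD' D))"
    then have qa: "q < nP y" "a < mP y" by (auto simp: nP_eq mP_eq)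
    have "(\<Sum>p\<in>states (aut_of (cD' D)). trans (aut_of (cD' D)) q a p) =
      (\<Sum>p<S+1. (if gC y q a 0 = p then 1/2 else 0) + (if gC y q a 1 = p then 1/2 else 0))"
      unfolding states_cD' by (rule sum.cong[OF refl]) (simp add: trans_cD'[OF qa])
    also have "\<dots> = (\<Sum>p<S+1. (if gC y q a 0 = p then 1/2 else 0)) + (\<Sum>p<S+1. (if gC y q a 1 = p then 1/2 else 0))"
      by (rule sum.distrib)
    also have "\<dots> = 1/2 + 1/2" using g[of q 0 a] g[of q 1 a] q
      by (simp only: sum.delta' finite_lessThan) simp
    also have "\<dots> = (1::real)" by simp
    finally show "(\<Sum>p\<in>states (aut_of (cD' D)). trans (aut_of (cD' D)) q a p) = 1" .
  qed
qed

lemma simple_cD': "simple_pra (aut_of (cD' D))"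
  unfolding simple_pra_def
proof (intro ballI)
  fix q a p assume q: "q \<in> states (aut_of (cD' D))" and a: "a \<in> alphabet (aut_of (cD' D))"
  then have qa: "q < nP y" "a < mP y" by (auto simp: nP_eq mP_eq)
  show "trans (aut_of (cD' D)) q a p \<in> {0, 1/2, 1}" unfolding trans_cD'[OF qa]
    by (cases "gC y q a 0 = p"; cases "gC y q a 1 = p") simp_all
qed

end


type_synonym npra = "(nat, nat) pra"

lemma space_run_space: "space (run_space A) = (UNIV \<rightarrow>\<^sub>E states A)"
  by (simp add: run_space_def space_PiM)

lemma cylinder_sets: "cylinder A x n \<in> sets (run_space A)"
proof -
  have "cylinder A x n = {r \<in> space (run_space A). \<forall>i\<in>{..n}. r i = x i}"
    by (auto simp: cylinder_def)
  also have "\<dots> \<in> sets (run_space A)"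
    unfolding run_space_def by measurable
  finally show ?thesis .
qed

lemma acc_sets: "{r \<in> space (run_space (A::npra)). rabin_accepting A r} \<in> sets (run_space A)"
proof -
  have "{r \<in> space (run_space A). rabin_accepting A r} =
    {r \<in> space (run_space A). \<exists>p\<in>set (pairs A). (\<exists>q. q \<in> fst p \<and> (\<forall>N. \<exists>i. N \<le> i \<and> r i = q)) \<and>
        (\<forall>q. q \<in> snd p \<longrightarrow> \<not> (\<forall>N. \<exists>i. N \<le> i \<and> r i = q))}"
  proof (intro Collect_cong conj_cong refl)
    fix r :: "nat \<Rightarrow> nat"
    have f: "\<And>q. (\<exists>\<^sub>\<infinity>i. r i = q) = (\<forall>N. \<exists>i. N \<le> i \<and> r i = q)" by (rule INFM_nat_le)
    show "rabin_accepting A r = (\<exists>p\<in>set (pairs A). (\<exists>q. q \<in> fst p \<and> (\<forall>N. \<exists>i. N \<le> i \<and> r i = q)) \<and>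
        (\<forall>q. q \<in> snd p \<longrightarrow> \<not> (\<forall>N. \<exists>i. N \<le> i \<and> r i = q)))"
      unfolding rabin_accepting_def f by (simp add: split_def Bex_def Ball_def)
  qed
  also have "\<dots> \<in> sets (run_space A)"
    unfolding run_space_def by measurable
  finally show ?thesis .
qed


lemma uniq_run_measure:
  fixes A :: npra
  assumes wf: "wf_pra A"
    and M1: "prob_space M1" "sets M1 = sets (run_space A)"
    and M2: "prob_space M2" "sets M2 = sets (run_space A)"
    and eq: "\<And>n x. (\<forall>i\<le>n. x i \<in> states A) \<Longrightarrow> measure M1 (cylinder A x n) = measure M2 (cylinder A x n)"
  shows "M1 = M2"
proof (rule measure_eqI_PiM_infinite[where I = UNIV and M = "\<lambda>_. count_space (states A)"])
  show "sets M1 = sets (Pi\<^sub>M UNIV (\<lambda>_. count_space (states A)))" using M1 by (simp add: run_space_def)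
  show "sets M2 = sets (Pi\<^sub>M UNIV (\<lambda>_. count_space (states A)))" using M2 by (simp add: run_space_def)
  show "finite_measure M1" using M1(1) by (simp add: prob_space_def)
next
  fix F and J :: "nat set"
  assume J: "finite J" and F: "\<And>i. i \<in> J \<Longrightarrow> F i \<in> sets (count_space (states A))"
  let ?S = "states A"
  interpret P1: prob_space M1 by (rule M1)
  interpret P2: prob_space M2 by (rule M2)
  have sp1: "space M1 = space (run_space A)" using M1 sets_eq_imp_space_eq by blast
  have sp2: "space M2 = space (run_space A)" using M2 sets_eq_imp_space_eq by blast
  let ?E = "prod_emb UNIV (\<lambda>_. count_space ?S) J (Pi\<^sub>E J F)"
  have E: "?E = {r \<in> space (run_space A). \<forall>j\<in>J. r j \<in> F j}"
    by (auto simp: prod_emb_iff space_run_space run_space_def space_PiM PiE_iff extensional_def)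
  show "emeasure M1 ?E = emeasure M2 ?E"
  proof (cases "J = {}")
    case True
    then have "?E = space (run_space A)" using E by simp
    then show ?thesis using sp1 sp2 P1.emeasure_space_1 P2.emeasure_space_1 by simp
  next
    case False
    define N where "N = Max J"
    have jN: "j \<in> J \<Longrightarrow> j \<le> N" for j using J by (simp add: N_def)
    let ?X = "Pi\<^sub>E {..N} (\<lambda>i. if i \<in> J then F i else ?S)"
    have fin: "finite ?S" using wf by (simp add: wf_pra_def)
    have FS: "i \<in> J \<Longrightarrow> F i \<subseteq> ?S" for i using F by auto
    have finX: "finite ?X" using fin FS by (intro finite_PiE) (auto intro: finite_subset)
    have EU: "?E = (\<Union>x\<in>?X. cylinder A x N)"
    proof (intro set_eqI iffI)
      fix r assume "r \<in> ?E"
      then have r: "r \<in> space (run_space A)" "\<forall>j\<in>J. r j \<in> F j" using E by auto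
      then have "restrict r {..N} \<in> ?X" by (auto simp: space_run_space PiE_iff)
      moreover have "r \<in> cylinder A (restrict r {..N}) N" using r by (simp add: cylinder_def)
      ultimately show "r \<in> (\<Union>x\<in>?X. cylinder A x N)" by blast
    next
      fix r assume "r \<in> (\<Union>x\<in>?X. cylinder A x N)"
      then obtain x where x: "x \<in> ?X" "r \<in> cylinder A x N" by blast
      have "\<forall>j\<in>J. r j \<in> F j"
      proof
        fix j assume j: "j \<in> J"
        then have "r j = x j" using x jN by (simp add: cylinder_def)
        moreover have "x j \<in> (if j \<in> J then F j else states A)" using x(1) jN[OF j] unfolding PiE_iff by blast
        ultimately show "r j \<in> F j" using j by simp
      qed
      then show "r \<in> ?E" using E x by (simp add: cylinder_def)
    qed
    have disj: "disjoint_family_on (\<lambda>x. cylinder A x N) ?X"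
    proof (unfold disjoint_family_on_def, intro ballI impI)
      fix x x' assume x: "x \<in> ?X" "x' \<in> ?X" "x \<noteq> x'"
      from x(3) obtain i where i1: "x i \<noteq> x' i" by (auto simp: fun_eq_iff)
      have "i \<le> N"
      proof (rule ccontr)
        assume "\<not> i \<le> N"
        then have "x i = undefined" "x' i = undefined" using x(1,2) by (auto simp: PiE_iff extensional_def)
        then show False using i1 by simp
      qed
      then have i: "i \<le> N" "x i \<noteq> x' i" using i1 by auto
      then show "cylinder A x N \<inter> cylinder A x' N = {}" by (auto simp: cylinder_def)
    qed
    have cyls: "(\<lambda>x. cylinder A x N) ` ?X \<subseteq> sets M1" "(\<lambda>x. cylinder A x N) ` ?X \<subseteq> sets M2"
      using M1 M2 cylinder_sets by auto
    have ceq: "x \<in> ?X \<Longrightarrow> emeasure M1 (cylinder A x N) = emeasure M2 (cylinder A x N)" for x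
    proof -
      assume x: "x \<in> ?X"
      then have "\<forall>i\<le>N. x i \<in> ?S" using FS by (auto simp: PiE_iff split: if_splits)
      then have "measure M1 (cylinder A x N) = measure M2 (cylinder A x N)" by (rule eq)
      then show ?thesis by (simp add: P1.emeasure_eq_measure P2.emeasure_eq_measure)
    qed
    have "emeasure M1 ?E = (\<Sum>x\<in>?X. emeasure M1 (cylinder A x N))"
      unfolding EU by (rule sum_emeasure[symmetric, OF cyls(1) disj finX])
    also have "\<dots> = (\<Sum>x\<in>?X. emeasure M2 (cylinder A x N))" using ceq by simp
    also have "\<dots> = emeasure M2 ?E"
      unfolding EU by (rule sum_emeasure[OF cyls(2) disj finX])
    finally show ?thesis .
  qed
qed

definition runG :: "npra \<Rightarrow> (nat \<Rightarrow> nat \<Rightarrow> 'c \<Rightarrow> nat) \<Rightarrow> (nat \<Rightarrow> nat) \<Rightarrow> (nat \<Rightarrow> 'c) \<Rightarrow> nat \<Rightarrow> nat" where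
  "runG A G w \<omega> i = rec_nat (initial A) (\<lambda>i s. G s (w i) (\<omega> i)) i"

lemma runG_simps[simp]: "runG A G w \<omega> 0 = initial A" "runG A G w \<omega> (Suc i) = G (runG A G w \<omega> i) (w i) (\<omega> i)"
  by (simp_all add: runG_def)

locale gen_run =
  fixes A :: npra and w :: "nat \<Rightarrow> nat" and Mc :: "'c measure" and G :: "nat \<Rightarrow> nat \<Rightarrow> 'c \<Rightarrow> nat"
  assumes wf: "wf_pra A" and w: "w \<in> words A" and Mc: "prob_space Mc"
    and Gst: "\<And>q a c. q \<in> states A \<Longrightarrow> a \<in> alphabet A \<Longrightarrow> c \<in> space Mc \<Longrightarrow> G q a c \<in> states A"
    and Gm: "\<And>q a. G q a \<in> measurable Mc (count_space UNIV)"
    and Gp: "\<And>q a p. q \<in> states A \<Longrightarrow> a \<in> alphabet A \<Longrightarrow> p \<in> states A \<Longrightarrow>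
        trans A q a p = measure Mc {c \<in> space Mc. G q a c = p}"
begin

abbreviation "\<Omega> \<equiv> Pi\<^sub>M (UNIV :: nat set) (\<lambda>_. Mc)"
abbreviation "run \<equiv> runG A G w"

lemma pps: "product_prob_space (\<lambda>_. Mc)"
  using Mc by (simp add: product_prob_space_def product_sigma_finite_def prob_space_imp_sigma_finite
      product_prob_space_axioms_def)

lemma ps\<Omega>: "prob_space \<Omega>"
proof -
  interpret product_prob_space "\<lambda>_. Mc" "UNIV :: nat set" by (rule pps)
  show ?thesis using P.emeasure_space_1 by (rule prob_spaceI)
qed

lemma run_in: "\<omega> \<in> space \<Omega> \<Longrightarrow> run \<omega> i \<in> states A"
proof (induction i)
  case 0 then show ?case using wf by (simp add: wf_pra_def)
next
  case (Suc i)
  have "w i \<in> alphabet A" using w by (simp add: words_def)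
  moreover have "\<omega> i \<in> space Mc" using Suc.prems by (auto simp: space_PiM PiE_iff)
  ultimately show ?case using Suc Gst by simp
qed

lemma run_coord_meas: "(\<lambda>\<omega>. run \<omega> i) \<in> measurable \<Omega> (count_space (states A))"
proof (induction i)
  case 0 then show ?case using wf by (simp add: wf_pra_def)
next
  case (Suc i)
  have fin: "countable (states A)" using wf by (simp add: wf_pra_def countable_finite)
  have "(\<lambda>\<omega>. G q (w i) (\<omega> i)) \<in> measurable \<Omega> (count_space UNIV)" for q
    using Gm[of q "w i"] by measurable
  then have m: "(\<lambda>\<omega>. G (run \<omega> i) (w i) (\<omega> i)) \<in> measurable \<Omega> (count_space UNIV)"
    using measurable_compose_countable'[of "states A" "\<lambda>q \<omega>. G q (w i) (\<omega> i)" \<Omega> "count_space UNIV"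
        "\<lambda>\<omega>. run \<omega> i", OF _ Suc fin] by blast
  show ?case
  proof (subst measurable_count_space_eq2_countable, intro conjI ballI)
    show "(\<lambda>\<omega>. run \<omega> (Suc i)) \<in> space \<Omega> \<rightarrow> states A" using run_in by blast
    fix s assume "s \<in> states A"
    have "(\<lambda>\<omega>. run \<omega> (Suc i)) -` {s} \<inter> space \<Omega> = (\<lambda>\<omega>. G (run \<omega> i) (w i) (\<omega> i)) -` {s} \<inter> space \<Omega>"
      by auto
    also have "\<dots> \<in> sets \<Omega>" using m by (rule measurable_sets) simp
    finally show "(\<lambda>\<omega>. run \<omega> (Suc i)) -` {s} \<inter> space \<Omega> \<in> sets \<Omega>" .
  qed
qed

lemma run_meas: "run \<in> measurable \<Omega> (run_space A)"
  unfolding run_space_def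
proof -
  have "(\<lambda>\<omega> i. run \<omega> i) \<in> measurable \<Omega> (Pi\<^sub>M UNIV (\<lambda>_. count_space (states A)))"
    by (rule measurable_PiM_single') (auto simp: run_coord_meas run_in)
  then show "run \<in> measurable \<Omega> (Pi\<^sub>M UNIV (\<lambda>_. count_space (states A)))" by simp
qed

lemma cyl_event:
  assumes "x 0 = initial A"
  shows "{\<omega> \<in> space \<Omega>. \<forall>i\<le>n. run \<omega> i = x i} = {\<omega> \<in> space \<Omega>. \<forall>i\<in>{..<n}. \<omega> i \<in> {c \<in> space Mc. G (x i) (w i) c = x (Suc i)}}"
proof -
  have "(\<forall>i\<le>n. run \<omega> i = x i) \<longleftrightarrow> (\<forall>i<n. G (x i) (w i) (\<omega> i) = x (Suc i))" for \<omega>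
  proof (induction n)
    case 0 then show ?case using assms by simp
  next
    case (Suc n)
    have "(\<forall>i\<le>Suc n. run \<omega> i = x i) \<longleftrightarrow> (\<forall>i\<le>n. run \<omega> i = x i) \<and> run \<omega> (Suc n) = x (Suc n)"
      by (auto simp: le_Suc_eq)
    also have "\<dots> \<longleftrightarrow> (\<forall>i<n. G (x i) (w i) (\<omega> i) = x (Suc i)) \<and> G (x n) (w n) (\<omega> n) = x (Suc n)"
      using Suc by auto
    also have "\<dots> \<longleftrightarrow> (\<forall>i<Suc n. G (x i) (w i) (\<omega> i) = x (Suc i))" by (auto simp: less_Suc_eq)
    finally show ?case .
  qed
  then show ?thesis by (auto simp: space_PiM)
qed

lemma distr_cyl:
  assumes x: "\<forall>i\<le>n. x i \<in> states A"
  shows "measure (distr \<Omega> (run_space A) run) (cylinder A x n) = cyl_prob A w x n"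
proof -
  interpret pps: product_prob_space "\<lambda>_. Mc" "UNIV :: nat set" by (rule pps)
  interpret Mc: prob_space Mc by (rule Mc)
  have "measure (distr \<Omega> (run_space A) run) (cylinder A x n) = measure \<Omega> (run -` cylinder A x n \<inter> space \<Omega>)"
    by (rule measure_distr[OF run_meas cylinder_sets])
  also have "run -` cylinder A x n \<inter> space \<Omega> = {\<omega> \<in> space \<Omega>. \<forall>i\<le>n. run \<omega> i = x i}"
    using run_meas by (auto simp: cylinder_def measurable_def)
  finally have m: "measure (distr \<Omega> (run_space A) run) (cylinder A x n) = measure \<Omega> {\<omega> \<in> space \<Omega>. \<forall>i\<le>n. run \<omega> i = x i}" .
  show ?thesis
  proof (cases "x 0 = initial A")
    case False
    then have e: "{\<omega> \<in> space \<Omega>. \<forall>i\<le>n. run \<omega> i = x i} = {}" by auto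
    have "measure (distr \<Omega> (run_space A) run) (cylinder A x n) = 0" unfolding m e by simp
    then show ?thesis using False by (simp add: cyl_prob_def)
  next
    case True
    let ?X = "\<lambda>i. {c \<in> space Mc. G (x i) (w i) c = x (Suc i)}"
    have Xs: "?X i \<in> sets Mc" for i
    proof -
      have "?X i = G (x i) (w i) -` {x (Suc i)} \<inter> space Mc" by auto
      also have "\<dots> \<in> sets Mc" using Gm by (rule measurable_sets) simp
      finally show ?thesis .
    qed
    have "emeasure \<Omega> {\<omega> \<in> space \<Omega>. \<forall>i\<le>n. run \<omega> i = x i} = (\<Prod>i\<in>{..<n}. emeasure Mc (?X i))"
      unfolding cyl_event[of x n, OF True] by (rule pps.emeasure_PiM_Collect) (auto simp: Xs)
    also have "\<dots> = (\<Prod>i\<in>{..<n}. ennreal (trans A (x i) (w i) (x (Suc i))))"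
    proof (rule prod.cong[OF refl])
      fix i assume i: "i \<in> {..<n}"
      have "w i \<in> alphabet A" using w by (simp add: words_def)
      then have "trans A (x i) (w i) (x (Suc i)) = measure Mc (?X i)" using x i by (intro Gp) auto
      then show "emeasure Mc (?X i) = ennreal (trans A (x i) (w i) (x (Suc i)))"
        by (simp add: pps.M.emeasure_eq_measure)
    qed
    also have "\<dots> = ennreal (\<Prod>i<n. trans A (x i) (w i) (x (Suc i)))"
    proof (rule prod_ennreal)
      fix i assume i: "i \<in> {..<n}"
      have "w i \<in> alphabet A" using w by (simp add: words_def)
      then show "0 \<le> trans A (x i) (w i) (x (Suc i))" using x i wf by (auto simp: wf_pra_def)
    qed
    finally have e: "emeasure \<Omega> {\<omega> \<in> space \<Omega>. \<forall>i\<le>n. run \<omega> i = x i} = ennreal (\<Prod>i<n. trans A (x i) (w i) (x (Suc i)))" .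
    have nn: "(\<Prod>i<n. trans A (x i) (w i) (x (Suc i))) \<ge> 0"
    proof (rule prod_nonneg)
      fix i assume i: "i \<in> {..<n}"
      have "w i \<in> alphabet A" using w by (simp add: words_def)
      then show "0 \<le> trans A (x i) (w i) (x (Suc i))" using x i wf by (auto simp: wf_pra_def)
    qed
    have "measure \<Omega> {\<omega> \<in> space \<Omega>. \<forall>i\<le>n. run \<omega> i = x i} = (\<Prod>i<n. trans A (x i) (w i) (x (Suc i)))"
      using e nn by (simp add: pps.P.emeasure_eq_measure)
    then show ?thesis using m True by (simp add: cyl_prob_def)
  qed
qed

theorem run_measure_eq: "run_measure A w = distr \<Omega> (run_space A) run"
proof -
  let ?D = "distr \<Omega> (run_space A) run"
  let ?P = "\<lambda>M. prob_space M \<and> sets M = sets (run_space A) \<and>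
      (\<forall>n x. (\<forall>i\<le>n. x i \<in> states A) \<longrightarrow> measure M (cylinder A x n) = cyl_prob A w x n)"
  have pD: "?P ?D"
    using distr_cyl prob_space.prob_space_distr[OF ps\<Omega> run_meas] by auto
  have "M = ?D" if "?P M" for M
    using uniq_run_measure[OF wf, of M ?D] that pD by auto
  then show ?thesis unfolding run_measure_def using pD by (rule the_equality[rotated])
qed

lemma acc_prob_eq: "acc_prob A w = measure \<Omega> {\<omega> \<in> space \<Omega>. rabin_accepting A (run \<omega>)}"
proof -
  have "acc_prob A w = measure \<Omega> (run -` {r \<in> space (run_space A). rabin_accepting A r} \<inter> space \<Omega>)"
    unfolding acc_prob_def run_measure_eq by (rule measure_distr[OF run_meas acc_sets])
  also have "run -` {r \<in> space (run_space A). rabin_accepting A r} \<inter> space \<Omega> =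
     {\<omega> \<in> space \<Omega>. rabin_accepting A (run \<omega>)}"
    using run_meas by (auto simp: measurable_def)
  finally show ?thesis .
qed

lemma acc_event_sets: "{\<omega> \<in> space \<Omega>. rabin_accepting A (run \<omega>)} \<in> sets \<Omega>"
proof -
  have "{\<omega> \<in> space \<Omega>. rabin_accepting A (run \<omega>)} = run -` {r \<in> space (run_space A). rabin_accepting A r} \<inter> space \<Omega>"
    using run_meas by (auto simp: measurable_def)
  also have "\<dots> \<in> sets \<Omega>" using run_meas acc_sets by (rule measurable_sets)
  finally show ?thesis .
qed

end


definition coin :: "bool measure" where "coin = measure_pmf (pmf_of_set UNIV)"

lemma coin_prob: "prob_space coin" by (simp add: coin_def prob_space_measure_pmf)
lemma space_coin[simp]: "space coin = UNIV" by (simp add: coin_def)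
lemma sets_coin[simp]: "sets coin = UNIV" by (simp add: coin_def)

lemma measure_coin: "measure coin X = card X / 2"
  by (simp add: coin_def measure_pmf_of_set)

lemma emeasure_coin: "emeasure coin X = ennreal (card X / 2)"
  using measure_coin[of X] by (simp add: coin_def measure_pmf.emeasure_eq_measure)

definition Mb :: "nat \<Rightarrow> (nat \<Rightarrow> bool) measure" where "Mb K = Pi\<^sub>M {..<K} (\<lambda>_. coin)"

lemma pps_coin: "product_prob_space (\<lambda>_::nat. coin)"
  using coin_prob by (simp add: product_prob_space_def product_sigma_finite_def prob_space_imp_sigma_finite
      product_prob_space_axioms_def)

lemma Mb_prob: "prob_space (Mb K)"
proof -
  interpret product_prob_space "\<lambda>_::nat. coin" "{..<K}" by (rule pps_coin)
  show ?thesis unfolding Mb_def using P.emeasure_space_1 by (rule prob_spaceI)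
qed

lemma space_Mb: "space (Mb K) = ({..<K} \<rightarrow>\<^sub>E UNIV)"
  by (simp add: Mb_def space_PiM)

lemma emeasure_Mb_PiE: "emeasure (Mb K) (Pi\<^sub>E {..<K} A) = (\<Prod>k<K. emeasure coin (A k))"
proof -
  interpret product_prob_space "\<lambda>_::nat. coin" "{..<K}" by (rule pps_coin)
  show ?thesis unfolding Mb_def by (rule emeasure_PiM) auto
qed

primrec vb :: "nat \<Rightarrow> (nat \<Rightarrow> bool) \<Rightarrow> nat" where
  "vb 0 f = 0"
| "vb (Suc j) f = 2 * vb j f + (if f j then 1 else 0)"

lemma vb_lt: "vb j f < 2 ^ j"
  by (induction j) auto

lemma vb_cong: "(\<And>i. i < j \<Longrightarrow> f i = g i) \<Longrightarrow> vb j f = vb j g"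
  by (induction j) auto

lemma vb_inj: "inj_on (vb K) ({..<K} \<rightarrow>\<^sub>E UNIV)"
proof (induction K)
  case 0 then show ?case by (simp add: inj_on_def)
next
  case (Suc K)
  show ?case
  proof (rule inj_onI)
    fix f g assume f: "f \<in> {..<Suc K} \<rightarrow>\<^sub>E UNIV" and g: "g \<in> {..<Suc K} \<rightarrow>\<^sub>E UNIV"
      and e: "vb (Suc K) f = vb (Suc K) g"
    have m: "vb (Suc K) h mod 2 = (if h K then 1 else 0)" for h by simp
    have "(if f K then 1 else 0::nat) = (if g K then 1 else 0)" using m[of f] m[of g] e by metis
    then have last: "f K = g K" by (auto split: if_splits)
    then have "vb K f = vb K g" using e by simp
    moreover have "vb K f = vb K (restrict f {..<K})" "vb K g = vb K (restrict g {..<K})"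
      by (auto intro: vb_cong)
    ultimately have "vb K (restrict f {..<K}) = vb K (restrict g {..<K})" by simp
    then have "restrict f {..<K} = restrict g {..<K}"
      using Suc.IH by (auto dest: inj_onD)
    then have "\<forall>i<K. f i = g i" by (metis lessThan_iff restrict_apply')
    then show "f = g" using f g last
      by (auto simp: fun_eq_iff PiE_iff extensional_def less_Suc_eq)
  qed
qed

lemma vb_bij: "bij_betw (vb K) ({..<K} \<rightarrow>\<^sub>E UNIV) {..<2 ^ K}"
proof -
  have "card ({..<K} \<rightarrow>\<^sub>E (UNIV :: bool set)) = 2 ^ K" by (simp add: card_PiE)
  moreover have "vb K ` ({..<K} \<rightarrow>\<^sub>E UNIV) \<subseteq> {..<2 ^ K}" using vb_lt by auto
  ultimately show ?thesis using vb_inj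
    by (metis bij_betw_def card_image card_lessThan card_subset_eq finite_lessThan)
qed

lemma measure_Mb_vb: "measure (Mb K) {f \<in> space (Mb K). Q (vb K f)} = card {v. v < 2 ^ K \<and> Q v} / 2 ^ K"
proof -
  let ?S = "{f \<in> space (Mb K). Q (vb K f)}"
  interpret Mb: prob_space "Mb K" by (rule Mb_prob)
  have fin: "finite (space (Mb K))" by (simp add: space_Mb finite_PiE)
  have sing: "measure (Mb K) {f} = 1 / 2 ^ K" if "f \<in> space (Mb K)" for f
  proof -
    have "{f} = Pi\<^sub>E {..<K} (\<lambda>k. {f k})" using that by (auto simp: space_Mb PiE_iff extensional_def fun_eq_iff)
    then have "emeasure (Mb K) {f} = (\<Prod>k<K. emeasure coin {f k})" by (simp add: emeasure_Mb_PiE)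
    also have "\<dots> = (\<Prod>k<K. ennreal (1 / 2))" by (simp add: emeasure_coin)
    also have "\<dots> = ennreal (1/2) ^ K" by simp
    also have "\<dots> = ennreal ((1/2) ^ K)" by (rule ennreal_power) simp
    finally show ?thesis by (simp add: Mb.emeasure_eq_measure power_one_over)
  qed
  have sets: "{f} \<in> sets (Mb K)" if "f \<in> space (Mb K)" for f
  proof -
    have "{f} = Pi\<^sub>E {..<K} (\<lambda>k. {f k})" using that by (auto simp: space_Mb PiE_iff extensional_def fun_eq_iff)
    also have "\<dots> \<in> sets (Mb K)" unfolding Mb_def by (rule sets_PiM_I_finite) auto
    finally show ?thesis .
  qed
  have "measure (Mb K) ?S = (\<Sum>f\<in>?S. measure (Mb K) {f})"
    using fin sets by (intro measure_eq_sum_singleton) (auto intro: finite_subset)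
  also have "\<dots> = card ?S / 2 ^ K" using sing by simp
  also have "card ?S = card {v. v < 2 ^ K \<and> Q v}"
  proof -
    have "bij_betw (vb K) ?S {v. v < 2 ^ K \<and> Q v}"
      using vb_bij[of K] unfolding space_Mb bij_betw_def inj_on_def by auto
    then show ?thesis by (rule bij_betw_same_card)
  qed
  finally show ?thesis .
qed


definition \<phi> :: "nat \<Rightarrow> (nat \<Rightarrow> nat \<Rightarrow> bool) \<Rightarrow> nat \<Rightarrow> bool" where
  "\<phi> K \<omega> t = \<omega> (t div K) (t mod K)"

abbreviation "\<Omega>D K \<equiv> Pi\<^sub>M (UNIV :: nat set) (\<lambda>_. Mb K)"
abbreviation "\<Omega>C \<equiv> Pi\<^sub>M (UNIV :: nat set) (\<lambda>_. coin)"

lemma space_\<Omega>C: "space \<Omega>C = UNIV"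
  by (simp add: space_PiM PiE_def extensional_def)

lemma \<phi>_meas:
  assumes K: "K > 0"
  shows "\<phi> K \<in> measurable (\<Omega>D K) \<Omega>C"
proof -
  have "(\<lambda>\<omega> t. \<omega> (t div K) (t mod K)) \<in> measurable (\<Omega>D K) \<Omega>C"
  proof (rule measurable_PiM_single')
    fix t :: nat
    have a: "(\<lambda>\<omega>. \<omega> (t div K)) \<in> measurable (\<Omega>D K) (Mb K)"
      by (rule measurable_component_singleton) simp
    have b: "(\<lambda>f. f (t mod K)) \<in> measurable (Mb K) coin"
      unfolding Mb_def by (rule measurable_component_singleton) (simp add: K)
    show "(\<lambda>\<omega>. \<omega> (t div K) (t mod K)) \<in> measurable (\<Omega>D K) coin"
      using measurable_comp[OF a b] by (simp add: comp_def)
  qed (simp add: PiE_def extensional_def)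
  then show ?thesis by (simp add: \<phi>_def[abs_def])
qed

lemma \<Omega>D_prob: "prob_space (\<Omega>D K)"
proof -
  have "product_prob_space (\<lambda>_::nat. Mb K)"
    using Mb_prob by (simp add: product_prob_space_def product_sigma_finite_def prob_space_imp_sigma_finite
      product_prob_space_axioms_def)
  then interpret product_prob_space "\<lambda>_::nat. Mb K" "UNIV :: nat set" .
  show ?thesis using P.emeasure_space_1 by (rule prob_spaceI)
qed

lemma reindex:
  assumes K: "K > 0"
  shows "distr (\<Omega>D K) \<Omega>C (\<phi> K) = \<Omega>C"
proof (rule measure_eqI_PiM_infinite[where I = UNIV and M = "\<lambda>_. coin"])
  show "sets (distr (\<Omega>D K) \<Omega>C (\<phi> K)) = sets \<Omega>C" by simp
  show "sets \<Omega>C = sets \<Omega>C" ..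
  show "finite_measure (distr (\<Omega>D K) \<Omega>C (\<phi> K))"
    using prob_space.prob_space_distr[OF \<Omega>D_prob \<phi>_meas[OF K]] by (simp add: prob_space_def)
next
  fix F and J :: "nat set"
  assume J: "finite J" and F: "\<And>i. i \<in> J \<Longrightarrow> F i \<in> sets coin"
  interpret C: product_prob_space "\<lambda>_::nat. coin" "UNIV :: nat set" by (rule pps_coin)
  have pD: "product_prob_space (\<lambda>_::nat. Mb K)"
    using Mb_prob by (simp add: product_prob_space_def product_sigma_finite_def prob_space_imp_sigma_finite
      product_prob_space_axioms_def)
  interpret D: product_prob_space "\<lambda>_::nat. Mb K" "UNIV :: nat set" by (rule pD)
  let ?E = "prod_emb UNIV (\<lambda>_. coin) J (Pi\<^sub>E J F)"
  have Es: "?E \<in> sets \<Omega>C" using J F by (intro sets_PiM_I) auto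
  have E: "?E = {\<omega>. \<forall>j\<in>J. \<omega> j \<in> F j}"
    by (auto simp: prod_emb_iff PiE_def extensional_def Pi_iff)
  let ?IJ = "(\<lambda>j. j div K) ` J"
  let ?B = "\<lambda>i. Pi\<^sub>E {..<K} (\<lambda>k. if i * K + k \<in> J then F (i * K + k) else UNIV)"
  have pre: "\<phi> K -` ?E \<inter> space (\<Omega>D K) = {\<omega> \<in> space (\<Omega>D K). \<forall>i\<in>?IJ. \<omega> i \<in> ?B i}"
  proof (intro set_eqI iffI)
    fix \<omega> assume "\<omega> \<in> \<phi> K -` ?E \<inter> space (\<Omega>D K)"
    then have \<omega>: "\<omega> \<in> space (\<Omega>D K)" "\<forall>j\<in>J. \<omega> (j div K) (j mod K) \<in> F j" by (auto simp: E \<phi>_def)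
    have "\<omega> i \<in> ?B i" if "i \<in> ?IJ" for i
    proof -
      have ext: "\<omega> i \<in> {..<K} \<rightarrow>\<^sub>E UNIV" using \<omega>(1) by (auto simp: space_PiM space_Mb PiE_iff)
      have "\<omega> i k \<in> F (i * K + k)" if "k < K" "i * K + k \<in> J" for k
      proof -
        have d: "(i * K + k) div K = i" "(i * K + k) mod K = k" using that K by simp_all
        show ?thesis using \<omega>(2)[rule_format, OF that(2)] unfolding d .
      qed
      then show ?thesis using ext by (auto simp: PiE_iff)
    qed
    then show "\<omega> \<in> {\<omega> \<in> space (\<Omega>D K). \<forall>i\<in>?IJ. \<omega> i \<in> ?B i}" using \<omega> by auto
  next
    fix \<omega> assume \<omega>: "\<omega> \<in> {\<omega> \<in> space (\<Omega>D K). \<forall>i\<in>?IJ. \<omega> i \<in> ?B i}"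
    have "\<omega> (j div K) (j mod K) \<in> F j" if j: "j \<in> J" for j
    proof -
      have B: "\<omega> (j div K) \<in> ?B (j div K)" using \<omega> j by auto
      have jm: "j mod K < K" using K by simp
      from B jm have "\<omega> (j div K) (j mod K) \<in> (if j div K * K + j mod K \<in> J then F (j div K * K + j mod K) else UNIV)"
        unfolding PiE_iff by blast
      then show ?thesis using j by simp
    qed
    then show "\<omega> \<in> \<phi> K -` ?E \<inter> space (\<Omega>D K)" using \<omega> by (auto simp: E \<phi>_def)
  qed
  let ?h = "\<lambda>j. emeasure coin (if j \<in> J then F j else UNIV)"
  have "emeasure (distr (\<Omega>D K) \<Omega>C (\<phi> K)) ?E = emeasure (\<Omega>D K) (\<phi> K -` ?E \<inter> space (\<Omega>D K))"
    by (rule emeasure_distr[OF \<phi>_meas[OF K] Es])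
  also have "\<dots> = (\<Prod>i\<in>?IJ. emeasure (Mb K) (?B i))"
    unfolding pre by (rule D.emeasure_PiM_Collect) (auto simp: J Mb_def intro!: sets_PiM_I_finite)
  also have "\<dots> = (\<Prod>i\<in>?IJ. \<Prod>k<K. ?h (i * K + k))"
    by (simp add: emeasure_Mb_PiE if_distrib)
  also have "\<dots> = (\<Prod>z\<in>?IJ \<times> {..<K}. ?h ((\<lambda>(i, k). i * K + k) z))"
    by (simp add: prod.cartesian_product split_def cong: if_cong)
  also have "\<dots> = (\<Prod>j\<in>(\<lambda>(i, k). i * K + k) ` (?IJ \<times> {..<K}). ?h j)"
  proof (rule prod.reindex[symmetric, unfolded comp_def])
    show "inj_on (\<lambda>(i, k). i * K + k) (?IJ \<times> {..<K})"
    proof (rule inj_onI, clarify)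
      fix i k i' k' assume "k < K" "k' < K" "i * K + k = i' * K + k'"
      then have "(i * K + k) div K = (i' * K + k') div K" "(i * K + k) mod K = (i' * K + k') mod K" by simp_all
      then show "i = i' \<and> k = k'" using \<open>k < K\<close> \<open>k' < K\<close> by simp
    qed
  qed
  also have "\<dots> = (\<Prod>j\<in>J. ?h j)"
  proof (rule prod.mono_neutral_right)
    show "finite ((\<lambda>(i, k). i * K + k) ` (?IJ \<times> {..<K}))" using J by simp
    show "J \<subseteq> (\<lambda>(i, k). i * K + k) ` (?IJ \<times> {..<K})"
    proof
      fix j assume "j \<in> J"
      moreover have "j = (\<lambda>(i, k). i * K + k) (j div K, j mod K)" by simp
      ultimately show "j \<in> (\<lambda>(i, k). i * K + k) ` (?IJ \<times> {..<K})"
        using K by (intro image_eqI[where x = "(j div K, j mod K)"]) auto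
    qed
    show "\<forall>j\<in>(\<lambda>(i, k). i * K + k) ` (?IJ \<times> {..<K}) - J. ?h j = 1"
      using coin_prob by (simp add: prob_space.emeasure_space_1[of coin, simplified])
  qed
  also have "\<dots> = (\<Prod>j\<in>J. emeasure coin (F j))" by simp
  also have "\<dots> = emeasure \<Omega>C ?E"
    by (rule emeasure_PiM_emb[symmetric]) (auto simp: J F coin_prob)
  finally show "emeasure (distr (\<Omega>D K) \<Omega>C (\<phi> K)) ?E = emeasure \<Omega>C ?E" .
qed


context wfD
begin

abbreviation "A \<equiv> aut_of D"
abbreviation "A' \<equiv> aut_of (cD' D)"
definition "G' q a (b::bool) = gC y q a (if b then 1 else 0)"
definition "GD q a f = targC y q a (vb K f)"
definition "pad w t = (if t mod K = 0 then w (t div K) else m)"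

lemma P_K: "P = 2 ^ K" by (rule P_eq)

lemma K_gt0: "K > 0" using K_pos by simp

lemma mod_Suc_K: "Suc t mod K = (if Suc (t mod K) = K then 0 else Suc (t mod K))"
  by (rule mod_Suc)

lemma runD_lt:
  assumes w: "\<forall>i. w i < m"
  shows "runG A GD w \<omega> i < n"
proof (induction i)
  case 0 then show ?case using init_lt by (simp add: aut_of_def)
next
  case (Suc i)
  then show ?case using targ_lt[OF Suc w[rule_format, of i] vb_lt[of K "\<omega> i"]] by (simp add: GD_def)
qed

lemma idx: "j < K \<Longrightarrow> (i * K + j) div K = i" "j < K \<Longrightarrow> (i * K + j) mod K = j"
  using K_gt0 by simp_all

lemma pow_le_P: "j \<le> K \<Longrightarrow> (2::nat) ^ j \<le> P"
  by (simp add: P_K power_increasing)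

lemma block:
  assumes w: "\<forall>i. w i < m"
  shows "runG A' G' (pad w) (\<phi> K \<omega>) (i * K) = runG A GD w \<omega> i \<and>
    (\<forall>j. 0 < j \<and> j < K \<longrightarrow> runG A' G' (pad w) (\<phi> K \<omega>) (i * K + j) =
        ic (runG A GD w \<omega> i) (w i) (2 ^ j + vb j (\<omega> i)))"
proof (induction i)
  let ?r' = "runG A' G' (pad w) (\<phi> K \<omega>)" and ?r = "runG A GD w \<omega>"
  have inner: "\<forall>j. 0 < j \<and> j < K \<longrightarrow> ?r' (i * K + j) = ic (?r i) (w i) (2 ^ j + vb j (\<omega> i))"
    if base: "?r' (i * K) = ?r i" for i
  proof (intro allI impI)
    fix j assume j: "0 < j \<and> j < K"
    then show "?r' (i * K + j) = ic (?r i) (w i) (2 ^ j + vb j (\<omega> i))"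
    proof (induction j)
      case 0 then show ?case by simp
    next
      case (Suc j)
      have ri: "?r i < n" using runD_lt[OF w] .
      have wi: "w i < m" using w by simp
      have jK: "j < K" using Suc by simp
      have pw: "pad w (i * K + j) = (if j = 0 then w i else m)" using idx[OF jK] K_gt0 by (simp add: pad_def)
      have ph: "\<phi> K \<omega> (i * K + j) = \<omega> i j" using idx[OF jK] by (simp add: \<phi>_def)
      have st: "?r' (i * K + Suc j) = gC y (?r' (i * K + j)) (pad w (i * K + j)) (if \<omega> i j then 1 else 0)"
        by (simp add: G'_def ph)
      have lt: "2 ^ Suc j + vb (Suc j) (\<omega> i) < P"
      proof -
        have "vb (Suc j) (\<omega> i) < 2 ^ Suc j" by (rule vb_lt)
        then have "2 ^ Suc j + vb (Suc j) (\<omega> i) < 2 ^ Suc (Suc j)" by simp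
        also have "\<dots> \<le> P" using Suc.prems by (intro pow_le_P) simp
        finally show ?thesis .
      qed
      show ?case
      proof (cases "j = 0")
        case True
        have "?r' (i * K + Suc j) = extC y (?r i) (w i) (2 + (if \<omega> i 0 then 1 else 0))"
          using st True base pw g_orig[OF ri wi] by simp
        also have "\<dots> = ic (?r i) (w i) (2 ^ Suc j + vb (Suc j) (\<omega> i))"
          using lt True by (simp add: ext_eq)
        finally show ?thesis .
      next
        case False
        then have IH: "?r' (i * K + j) = ic (?r i) (w i) (2 ^ j + vb j (\<omega> i))" using Suc by simp
        have b: "2 \<le> 2 ^ j + vb j (\<omega> i)" "2 ^ j + vb j (\<omega> i) < P"
        proof -
          have "(2::nat) ^ 1 \<le> 2 ^ j" using False by (intro power_increasing) auto
          then show "2 \<le> 2 ^ j + vb j (\<omega> i)" by simp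
          have "2 ^ j + vb j (\<omega> i) < 2 ^ Suc j" using vb_lt[of j "\<omega> i"] by simp
          also have "\<dots> \<le> P" using Suc.prems by (intro pow_le_P) simp
          finally show "2 ^ j + vb j (\<omega> i) < P" .
        qed
        have "?r' (i * K + Suc j) = extC y (?r i) (w i) (2 * (2 ^ j + vb j (\<omega> i)) + (if \<omega> i j then 1 else 0))"
          using st False IH pw g_int[OF ri wi b] by simp
        also have "\<dots> = ic (?r i) (w i) (2 ^ Suc j + vb (Suc j) (\<omega> i))"
          using lt by (simp add: ext_eq algebra_simps)
        finally show ?thesis .
      qed
    qed
  qed
  {
    case 0
    have "?r' (0 * K) = ?r 0" by (simp add: aut_of_def cD'_def Let_def)
    then show ?case using inner[of 0] by simp
  next
    case (Suc i)
    have base: "?r' (i * K) = ?r i" using Suc by simp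
    have ri: "?r i < n" using runD_lt[OF w] .
    have wi: "w i < m" using w by simp
    have "?r' (Suc i * K) = ?r (Suc i)"
    proof (cases "K = 1")
      case True
      have "?r' (Suc i * K) = gC y (?r i) (w i) (if \<omega> i 0 then 1 else 0)"
        using base True by (simp add: G'_def pad_def \<phi>_def)
      also have "\<dots> = targC y (?r i) (w i) (vb K (\<omega> i))"
        using g_orig[OF ri wi] True by (simp add: ext_eq P_K)
      finally show ?thesis by (simp add: GD_def)
    next
      case False
      then have K2: "K \<ge> 2" using K_pos by simp
      let ?j = "K - 1"
      have jK: "0 < ?j \<and> ?j < K" using K2 by simp
      have eqK: "Suc i * K = Suc (i * K + ?j)" using K2 by simp
      have IH: "?r' (i * K + ?j) = ic (?r i) (w i) (2 ^ ?j + vb ?j (\<omega> i))"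
        using inner[OF base] jK by blast
      have pw: "pad w (i * K + ?j) = m" using idx[of ?j i] jK by (simp add: pad_def)
      have ph: "\<phi> K \<omega> (i * K + ?j) = \<omega> i ?j" using idx[of ?j i] jK by (simp add: \<phi>_def)
      have b: "2 \<le> 2 ^ ?j + vb ?j (\<omega> i)" "2 ^ ?j + vb ?j (\<omega> i) < P"
      proof -
        have "(2::nat) ^ 1 \<le> 2 ^ ?j" using jK by (intro power_increasing) auto
        then show "2 \<le> 2 ^ ?j + vb ?j (\<omega> i)" by simp
        have "2 ^ ?j + vb ?j (\<omega> i) < 2 ^ Suc ?j" using vb_lt[of ?j "\<omega> i"] by simp
        also have "\<dots> = P" using K2 by (simp add: P_K)
        finally show "2 ^ ?j + vb ?j (\<omega> i) < P" .
      qed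
      have v: "2 * (2 ^ ?j + vb ?j (\<omega> i)) + (if \<omega> i ?j then 1 else 0) = P + vb K (\<omega> i)"
      proof -
        have "K = Suc ?j" using K2 by simp
        then have "vb K (\<omega> i) = 2 * vb ?j (\<omega> i) + (if \<omega> i ?j then 1 else 0)"
          by (metis vb.simps(2))
        moreover have "P = 2 * 2 ^ ?j" using K2 by (simp add: P_K power_Suc[symmetric])
        ultimately show ?thesis by simp
      qed
      have "?r' (Suc i * K) = gC y (ic (?r i) (w i) (2 ^ ?j + vb ?j (\<omega> i))) m (if \<omega> i ?j then 1 else 0)"
        unfolding eqK using IH pw ph by (simp add: G'_def)
      also have "\<dots> = targC y (?r i) (w i) (vb K (\<omega> i))"
        using g_int[OF ri wi b] v by (simp add: ext_eq)
      finally show ?thesis by (simp add: GD_def)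
    qed
    then show ?case using inner[of "Suc i"] by simp
  }
qed

end


context wfD
begin

lemma rabin_bound:
  assumes "(al, be) \<in> set (pairs A)" "q \<in> al \<union> be"
  shows "q < B"
proof -
  obtain al' be' where ab: "(al', be') \<in> set (c_rabin D)" "al = set al'" "be = set be'"
    using assms(1) by (auto simp: aut_of_def)
  have "q < list_encode al' \<or> q < list_encode be'" using assms(2) ab lt_list_encode by auto
  then have "q < prod_encode (list_encode al', list_encode be')"
    using le_prod_encode_1[of "list_encode al'" "list_encode be'"] le_prod_encode_2[of "list_encode be'" "list_encode al'"]
    by auto
  also have "\<dots> < Rcode D" unfolding Rcode_def by (rule lt_list_encode) (use ab in force)
  finally show ?thesis by (simp add: B_eq)
qed

lemma infm_image:
  fixes r' r :: "nat \<Rightarrow> nat"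
  assumes "\<And>t. r' t = q \<longleftrightarrow> (t mod K = 0 \<and> r (t div K) = q)"
  shows "(\<exists>\<^sub>\<infinity>t. r' t = q) \<longleftrightarrow> (\<exists>\<^sub>\<infinity>i. r i = q)"
proof -
  have se: "{t. r' t = q} = (\<lambda>i. i * K) ` {i. r i = q}"
  proof (intro set_eqI iffI)
    fix t assume "t \<in> {t. r' t = q}"
    then have "t mod K = 0" "r (t div K) = q" using assms by auto
    then show "t \<in> (\<lambda>i. i * K) ` {i. r i = q}"
      by (intro image_eqI[where x = "t div K"]) (auto simp: mult.commute)
  next
    fix t assume "t \<in> (\<lambda>i. i * K) ` {i. r i = q}"
    then obtain i where "t = i * K" "r i = q" by auto
    then show "t \<in> {t. r' t = q}" using assms K_gt0 by simp
  qed
  have ij: "inj_on (\<lambda>i::nat. i * K) {i. r i = q}" using K_gt0 by (auto simp: inj_on_def)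
  have "finite ((\<lambda>i. i * K) ` {i. r i = q}) \<longleftrightarrow> finite {i. r i = q}"
    by (rule finite_image_iff[OF ij])
  then show ?thesis using se by (simp add: frequently_cofinite)
qed

lemma good_acc:
  assumes w: "\<forall>i. w i < m"
  shows "rabin_accepting A' (runG A' G' (pad w) (\<phi> K \<omega>)) \<longleftrightarrow> rabin_accepting A (runG A GD w \<omega>)"
proof -
  let ?r' = "runG A' G' (pad w) (\<phi> K \<omega>)" and ?r = "runG A GD w \<omega>"
  have eq: "(\<exists>\<^sub>\<infinity>t. ?r' t = q) \<longleftrightarrow> (\<exists>\<^sub>\<infinity>i. ?r i = q)" if q: "q < B" for q
  proof (rule infm_image)
    fix t
    obtain i j where t: "t = i * K + j" "j < K"
      using K_gt0 by (metis div_mult_mod_eq mod_less_divisor)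
    have ti: "t div K = i" "t mod K = j" using t K_gt0 by simp_all
    have blk: "?r' (i * K) = ?r i" "\<And>j. 0 < j \<and> j < K \<Longrightarrow> ?r' (i * K + j) = ic (?r i) (w i) (2 ^ j + vb j (\<omega> i))"
      using block[OF w, where i = i and \<omega> = \<omega>] by blast+
    show "?r' t = q \<longleftrightarrow> (t mod K = 0 \<and> ?r (t div K) = q)"
    proof (cases "j = 0")
      case True then show ?thesis using blk(1) t ti by simp
    next
      case False
      have ri: "?r i < n" using runD_lt[OF w] .
      have "2 ^ j + vb j (\<omega> i) < P"
      proof -
        have "2 ^ j + vb j (\<omega> i) < 2 ^ Suc j" using vb_lt[of j "\<omega> i"] by simp
        also have "\<dots> \<le> P" using t by (intro pow_le_P) simp
        finally show ?thesis .
      qed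
      then have "B \<le> ic (?r i) (w i) (2 ^ j + vb j (\<omega> i))" using ic_bounds[OF ri w[rule_format, of i]] by blast
      then have "B \<le> ?r' t" using blk(2)[of j] False t by simp
      then show ?thesis using q False ti by auto
    qed
  qed
  show ?thesis
    unfolding rabin_accepting_def pairs_cD'
  proof (intro bex_cong[OF refl])
    fix p assume p: "p \<in> set (pairs A)"
    obtain al be where pe: "p = (al, be)" by (cases p)
    have bd: "\<forall>q\<in>al \<union> be. q < B" using rabin_bound p pe by blast
    have 1: "(\<exists>q\<in>al. \<exists>\<^sub>\<infinity>i. ?r' i = q) = (\<exists>q\<in>al. \<exists>\<^sub>\<infinity>i. ?r i = q)"
      using eq bd by (intro bex_cong refl) auto
    have 2: "(\<forall>q\<in>be. \<not> (\<exists>\<^sub>\<infinity>i. ?r' i = q)) = (\<forall>q\<in>be. \<not> (\<exists>\<^sub>\<infinity>i. ?r i = q))"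
      using eq bd by (intro ball_cong refl) auto
    show "(case p of (\<alpha>, \<beta>) \<Rightarrow> (\<exists>q\<in>\<alpha>. \<exists>\<^sub>\<infinity>i. ?r' i = q) \<and> (\<forall>q\<in>\<beta>. \<not> (\<exists>\<^sub>\<infinity>i. ?r' i = q))) =
        (case p of (\<alpha>, \<beta>) \<Rightarrow> (\<exists>q\<in>\<alpha>. \<exists>\<^sub>\<infinity>i. ?r i = q) \<and> (\<forall>q\<in>\<beta>. \<not> (\<exists>\<^sub>\<infinity>i. ?r i = q)))"
      unfolding pe prod.case using 1 2 by simp
  qed
qed

definition "good w' \<longleftrightarrow> (\<forall>t. t mod K = 0 \<longleftrightarrow> w' t < m)"

definition "rinv r t \<longleftrightarrow> r t = S \<or> (t mod K = 0 \<and> r t < n) \<or>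
   (t mod K \<noteq> 0 \<and> (\<exists>q a p. q < n \<and> a < m \<and> 2 ^ (t mod K) \<le> p \<and> p < 2 ^ Suc (t mod K) \<and> r t = ic q a p))"

lemma inv_all:
  assumes w': "\<forall>t. w' t \<le> m"
  shows "rinv (runG A' G' w' \<omega>) t"
proof (induction t)
  case 0 then show ?case using init_lt by (simp add: rinv_def aut_of_def cD'_def Let_def)
next
  case (Suc t)
  let ?r = "runG A' G' w' \<omega>"
  define b :: nat where "b = (if \<omega> t then 1 else 0)"
  have b1: "b \<le> 1" by (simp add: b_def)
  have st: "?r (Suc t) = gC y (?r t) (w' t) b" by (simp add: G'_def b_def)
  have ms: "Suc t mod K = (if Suc (t mod K) = K then 0 else Suc (t mod K))" by (rule mod_Suc_K)
  have tK: "t mod K < K" using K_gt0 by simp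
  from Suc consider (s) "?r t = S" | (o) "t mod K = 0" "?r t < n"
    | (i) q a p where "t mod K \<noteq> 0" "q < n" "a < m" "2 ^ (t mod K) \<le> p" "p < 2 ^ Suc (t mod K)" "?r t = ic q a p"
    unfolding rinv_def by fastforce
  then show ?case
  proof cases
    case s then show ?thesis using st g_sink by (simp add: rinv_def)
  next
    case o
    show ?thesis
    proof (cases "w' t < m")
      case False then show ?thesis using st o g_orig_bad by (simp add: rinv_def)
    next
      case True
      have e: "?r (Suc t) = extC y (?r t) (w' t) (2 + b)" using st g_orig[OF o(2) True] by simp
      show ?thesis
      proof (cases "K = 1")
        case True
        then have "P = 2" by (simp add: P_K)
        then have "?r (Suc t) < n" using e targ_lt[OF o(2) \<open>w' t < m\<close>, of b] b1 by (simp add: ext_eq P_K)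
        then show ?thesis using True by (simp add: rinv_def)
      next
        case False
        then have K2: "K \<ge> 2" using K_pos by simp
        have "(2::nat) ^ 2 \<le> P" using K2 by (intro pow_le_P)
        then have "2 + b < P" using b1 by simp
        then have rs: "?r (Suc t) = ic (?r t) (w' t) (2 + b)" using e by (simp add: ext_eq)
        have m1: "Suc t mod K = 1" using ms o K2 by simp
        have "\<exists>q a p. q < n \<and> a < m \<and> 2 ^ (Suc t mod K) \<le> p \<and> p < 2 ^ Suc (Suc t mod K) \<and> ?r (Suc t) = ic q a p"
          using o True b1 rs m1 by (intro exI[of _ "?r t"] exI[of _ "w' t"] exI[of _ "2 + b"]) simp
        then show ?thesis using m1 unfolding rinv_def by simp
      qed
    qed
  next
    case i
    have pP: "2 \<le> p" "p < P"
    proof -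
      have "(2::nat) ^ 1 \<le> 2 ^ (t mod K)" using i(1) by (intro power_increasing) auto
      then show "2 \<le> p" using i by simp
      have "(2::nat) ^ Suc (t mod K) \<le> P" using tK by (intro pow_le_P) simp
      then show "p < P" using i by simp
    qed
    show ?thesis
    proof (cases "w' t = m")
      case False then show ?thesis using st i g_int_bad[OF i(2,3) pP(2) False] by (simp add: rinv_def)
    next
      case True
      have e: "?r (Suc t) = extC y q a (2 * p + b)" using st i g_int[OF i(2,3) pP] True by simp
      show ?thesis
      proof (cases "Suc (t mod K) = K")
        case True
        then have "P = 2 ^ Suc (t mod K)" by (simp add: P_K)
        then have "P \<le> 2 * p + b" "2 * p + b - P < 2 ^ K" using i b1 by (auto simp: P_K)
        then have "?r (Suc t) < n" using e targ_lt[OF i(2,3)] by (simp add: ext_eq)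
        then show ?thesis using True ms by (simp add: rinv_def)
      next
        case False
        then have "Suc (Suc (t mod K)) \<le> K" using tK by simp
        then have "(2::nat) ^ Suc (Suc (t mod K)) \<le> P" by (rule pow_le_P)
        moreover have "2 * p + b < 2 ^ Suc (Suc (t mod K))" using i b1 by simp
        ultimately have "?r (Suc t) = ic q a (2 * p + b)" using e by (simp add: ext_eq)
        moreover have "2 ^ Suc (t mod K) \<le> 2 * p + b" using i by simp
        moreover have "2 * p + b < 2 ^ Suc (Suc (t mod K))" using i b1 by simp
        ultimately have "\<exists>q' a' p'. q' < n \<and> a' < m \<and> 2 ^ (Suc t mod K) \<le> p' \<and> p' < 2 ^ Suc (Suc t mod K) \<and> ?r (Suc t) = ic q' a' p'"
          using False ms i by (intro exI[of _ q] exI[of _ a] exI[of _ "2 * p + b"]) simp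
        then show ?thesis using False ms unfolding rinv_def by simp
      qed
    qed
  qed
qed

lemma bad_sink:
  assumes w': "\<forall>t. w' t \<le> m" and bad: "\<not> good w'"
  shows "\<exists>T. \<forall>t\<ge>T. runG A' G' w' \<omega> t = S"
proof -
  let ?r = "runG A' G' w' \<omega>"
  from bad[unfolded good_def not_all] obtain t0 where t0: "\<not> (t0 mod K = 0 \<longleftrightarrow> w' t0 < m)" ..
  have "?r (Suc t0) = S"
  proof -
    have st: "?r (Suc t0) = gC y (?r t0) (w' t0) (if \<omega> t0 then 1 else 0)" by (simp add: G'_def)
    have iv: "rinv ?r t0" by (rule inv_all[OF w'])
    show ?thesis
    proof (cases "t0 mod K = 0")
      case True
      then have "\<not> w' t0 < m" using t0 by simp
      from iv True have "?r t0 = S \<or> ?r t0 < n" unfolding rinv_def by blast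
      then show ?thesis
      proof
        assume "?r t0 = S" then show ?thesis using st g_sink by simp
      next
        assume "?r t0 < n" then show ?thesis using st g_orig_bad[OF _ \<open>\<not> w' t0 < m\<close>] by simp
      qed
    next
      case False
      then have "w' t0 \<noteq> m" using t0 by auto
      have tK: "Suc (t0 mod K) \<le> K" using K_gt0 by (simp add: Suc_leI)
      from iv False consider (s) "?r t0 = S"
        | (i) q a p where "q < n" "a < m" "p < 2 ^ Suc (t0 mod K)" "?r t0 = ic q a p"
        unfolding rinv_def by blast
      then show ?thesis
      proof cases
        case s then show ?thesis using st g_sink by simp
      next
        case i
        have "p < P" using i(3) pow_le_P[OF tK] by simp
        then show ?thesis using st i g_int_bad[OF i(1,2) _ \<open>w' t0 \<noteq> m\<close>] by simp
      qed
    qed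
  qed
  then have tl: "?r (Suc t0 + k) = S" for k
  proof (induction k)
    case 0 then show ?case by simp
  next
    case (Suc k)
    have "?r (Suc t0 + Suc k) = G' (?r (Suc t0 + k)) (w' (Suc t0 + k)) (\<omega> (Suc t0 + k))" by simp
    then show ?case using Suc g_sink by (simp add: G'_def)
  qed
  have "\<forall>t\<ge>Suc t0. ?r t = S"
  proof (intro allI impI)
    fix t assume "Suc t0 \<le> t"
    then have "t = Suc t0 + (t - Suc t0)" by simp
    then show "?r t = S" using tl[of "t - Suc t0"] by metis
  qed
  then show ?thesis by blast
qed

lemma bad_not_acc:
  assumes w': "\<forall>t. w' t \<le> m" and bad: "\<not> good w'"
  shows "\<not> rabin_accepting A' (runG A' G' w' \<omega>)"
proof
  assume acc: "rabin_accepting A' (runG A' G' w' \<omega>)"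
  obtain T where T: "\<forall>t\<ge>T. runG A' G' w' \<omega> t = S" using bad_sink[OF w' bad] by blast
  from acc obtain al be q where p: "(al, be) \<in> set (pairs A)" and q: "q \<in> al" and inf: "\<exists>\<^sub>\<infinity>i. runG A' G' w' \<omega> i = q"
    unfolding rabin_accepting_def pairs_cD' by auto
  have "q < B" using rabin_bound p q by blast
  then have "q \<noteq> S" by (simp add: S_eq)
  then have "{i. runG A' G' w' \<omega> i = q} \<subseteq> {..<T}" using T by (auto simp: not_le[symmetric])
  then have "finite {i. runG A' G' w' \<omega> i = q}" by (rule finite_subset) simp
  then show False using inf by (simp add: frequently_cofinite)
qed

end


lemma meas_coin_any: "f \<in> measurable coin (count_space UNIV)"
  by (auto simp: measurable_def)

lemma Mb_sets: "X \<subseteq> space (Mb K) \<Longrightarrow> X \<in> sets (Mb K)"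
proof -
  assume X: "X \<subseteq> space (Mb K)"
  have fin: "finite X" using X by (rule finite_subset) (simp add: space_Mb finite_PiE)
  have sing: "{f} \<in> sets (Mb K)" if "f \<in> space (Mb K)" for f
  proof -
    have "{f} = Pi\<^sub>E {..<K} (\<lambda>k. {f k})" using that by (auto simp: space_Mb PiE_iff extensional_def fun_eq_iff)
    also have "\<dots> \<in> sets (Mb K)" unfolding Mb_def by (rule sets_PiM_I_finite) auto
    finally show ?thesis .
  qed
  have "X = (\<Union>f\<in>X. {f})" by auto
  also have "\<dots> \<in> sets (Mb K)" using fin sing X by (intro sets.finite_UN) auto
  finally show ?thesis .
qed

lemma meas_Mb_any: "f \<in> measurable (Mb K) (count_space UNIV)"
  by (auto simp: measurable_def intro: Mb_sets)

lemma card_bool: "card {b::bool. P b} = (if P True then 1 else 0) + (if P False then 1 else 0)"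
proof -
  have "{b::bool. P b} = (if P True then {True} else {}) \<union> (if P False then {False} else {})"
    by (auto split: if_splits) (metis (full_types))+
  then show ?thesis by (auto split: if_splits)
qed

context wfD
begin

lemma words_A: "words A = {w. \<forall>i. w i < m}" by (simp add: words_def aut_of_def)
lemma words_A': "words A' = {w. \<forall>t. w t \<le> m}"
  by (auto simp: words_def less_Suc_eq_le)

lemma gen_C:
  assumes "w' \<in> words A'"
  shows "gen_run A' w' coin G'"
proof -
  have Gst: "G' q a c \<in> states A'" if "q \<in> states A'" "a \<in> alphabet A'" "c \<in> space coin" for q a c
  proof -
    have "q \<le> S" using that by simp
    then have "gC y q a b \<le> S" if "b \<le> 1" for b using g_range that by blast
    then show ?thesis by (cases c) (simp_all add: G'_def less_Suc_eq_le)
  qed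
  have Gm: "G' q a \<in> measurable coin (count_space UNIV)" for q a by (rule meas_coin_any)
  have Gp: "trans A' q a p = measure coin {c \<in> space coin. G' q a c = p}"
    if q: "q \<in> states A'" and a: "a \<in> alphabet A'" and p: "p \<in> states A'" for q a p
  proof -
    have qa: "q < nP y" "a < mP y" using q a by (simp_all add: nP_eq mP_eq)
    show ?thesis unfolding trans_cD'[OF qa] measure_coin G'_def by (simp add: card_bool)
  qed
  show ?thesis by (rule gen_run.intro[OF wf_cD' assms coin_prob Gst Gm Gp])
qed

lemma gen_D:
  assumes "w \<in> words A"
  shows "gen_run A w (Mb K) GD"
proof -
  have Gst: "GD q a c \<in> states A" if "q \<in> states A" "a \<in> alphabet A" "c \<in> space (Mb K)" for q a c
    using that targ_lt[of q a "vb K c"] vb_lt[of K c] by (simp add: GD_def aut_of_def)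
  have Gm: "GD q a \<in> measurable (Mb K) (count_space UNIV)" for q a by (rule meas_Mb_any)
  have Gp: "trans A q a p = measure (Mb K) {c \<in> space (Mb K). GD q a c = p}"
    if q: "q \<in> states A" and a: "a \<in> alphabet A" and p: "p \<in> states A" for q a p
  proof -
    have qap: "q < n" "a < m" "p < n" using q a p by (simp_all add: aut_of_def)
    have "measure (Mb K) {c \<in> space (Mb K). GD q a c = p} = card {v. v < 2 ^ K \<and> targC y q a v = p} / 2 ^ K"
      unfolding GD_def by (rule measure_Mb_vb)
    also have "\<dots> = trans A q a p" using targ_count[OF qap] by simp
    finally show ?thesis by simp
  qed
  show ?thesis by (rule gen_run.intro[OF wf assms Mb_prob Gst Gm Gp])
qed

lemma pad_words: "w \<in> words A \<Longrightarrow> pad w \<in> words A'"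
  by (auto simp: words_A words_A' pad_def less_imp_le)

lemma acc_pad:
  assumes w: "w \<in> words A"
  shows "acc_prob A' (pad w) = acc_prob A w"
proof -
  interpret C: gen_run A' "pad w" coin G' by (rule gen_C[OF pad_words[OF w]])
  interpret DD: gen_run A w "Mb K" GD by (rule gen_D[OF w])
  have wl: "\<forall>i. w i < m" using w by (simp add: words_A)
  let ?S = "{\<omega>' \<in> space \<Omega>C. rabin_accepting A' (runG A' G' (pad w) \<omega>')}"
  have "acc_prob A' (pad w) = measure \<Omega>C ?S" by (rule C.acc_prob_eq)
  also have "\<dots> = measure (distr (\<Omega>D K) \<Omega>C (\<phi> K)) ?S" by (simp add: reindex[OF K_gt0])
  also have "\<dots> = measure (\<Omega>D K) (\<phi> K -` ?S \<inter> space (\<Omega>D K))"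
    by (rule measure_distr[OF \<phi>_meas[OF K_gt0] C.acc_event_sets])
  also have "\<phi> K -` ?S \<inter> space (\<Omega>D K) = {\<omega> \<in> space (\<Omega>D K). rabin_accepting A (runG A GD w \<omega>)}"
    using good_acc[OF wl] by (auto simp: space_\<Omega>C)
  also have "measure (\<Omega>D K) \<dots> = acc_prob A w" by (rule DD.acc_prob_eq[symmetric])
  finally show ?thesis .
qed

lemma acc_bad:
  assumes w': "w' \<in> words A'" and bad: "\<not> good w'"
  shows "acc_prob A' w' = 0"
proof -
  interpret C: gen_run A' w' coin G' by (rule gen_C[OF w'])
  have wl: "\<forall>t. w' t \<le> m" using w' by (simp add: words_A')
  have e: "{\<omega>' \<in> space \<Omega>C. rabin_accepting A' (runG A' G' w' \<omega>')} = {}"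
    using bad_not_acc[OF wl bad] by auto
  show ?thesis by (simp only: C.acc_prob_eq e measure_empty)
qed

lemma good_unpad:
  assumes w': "w' \<in> words A'" and g: "good w'"
  shows "(\<lambda>i. w' (i * K)) \<in> words A" "pad (\<lambda>i. w' (i * K)) = w'"
proof -
  have "w' (i * K) < m" for i
  proof -
    have "(i * K) mod K = 0" by simp
    then show ?thesis using g[unfolded good_def, rule_format, of "i * K"] by simp
  qed
  then show "(\<lambda>i. w' (i * K)) \<in> words A" by (simp add: words_A)
  have "pad (\<lambda>i. w' (i * K)) t = w' t" for t
  proof (cases "t mod K = 0")
    case True
    then have "t div K * K = t" by (metis div_mult_mod_eq add_0_right)
    then show ?thesis using True by (simp add: pad_def)
  next
    case False
    then have "\<not> w' t < m" using g[unfolded good_def, rule_format, of t] by simp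
    moreover have "w' t \<le> m" using w' by (simp add: words_A')
    ultimately show ?thesis using False by (simp add: pad_def)
  qed
  then show "pad (\<lambda>i. w' (i * K)) = w'" by auto
qed

lemma lang_equiv:
  assumes Q0: "\<not> Q 0"
  shows "(\<exists>w\<in>words A. Q (acc_prob A w)) \<longleftrightarrow> (\<exists>w'\<in>words A'. Q (acc_prob A' w'))"
proof
  assume "\<exists>w\<in>words A. Q (acc_prob A w)"
  then obtain w where "w \<in> words A" "Q (acc_prob A w)" by blast
  then show "\<exists>w'\<in>words A'. Q (acc_prob A' w')" using pad_words acc_pad by metis
next
  assume "\<exists>w'\<in>words A'. Q (acc_prob A' w')"
  then obtain w' where w': "w' \<in> words A'" "Q (acc_prob A' w')" by blast
  then have g: "good w'" using acc_bad Q0 by metis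
  show "\<exists>w\<in>words A. Q (acc_prob A w)"
    using good_unpad[OF w'(1) g] acc_pad w'(2) by metis
qed

lemma lang_pos_iff: "lang_pos A = {} \<longleftrightarrow> lang_pos A' = {}"
  using lang_equiv[of "\<lambda>x. x > 0"] by (auto simp: lang_pos_def)

lemma lang_one_iff: "lang_one A = {} \<longleftrightarrow> lang_one A' = {}"
  using lang_equiv[of "\<lambda>x. x = 1"] by (auto simp: lang_one_def)

end

theorem lemma3p5:
  shows "\<exists>c :: recf. \<forall>D :: pra_code.
     wf_pra (aut_of D) \<and> semi_simple_pra (aut_of D) \<longrightarrow>
     (\<exists>D' :: pra_code. rec_eval c [encode_code D] (encode_code D') \<and>
        wf_pra (aut_of D') \<and> simple_pra (aut_of D') \<and>
        (lang_one (aut_of D) = {} \<longleftrightarrow> lang_one (aut_of D') = {}) \<and>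
        (lang_pos (aut_of D) = {} \<longleftrightarrow> lang_pos (aut_of D') = {}))"
proof (rule exI[of _ "cmp 1 ProgE"], intro allI impI)
  fix D :: pra_code
  assume "wf_pra (aut_of D) \<and> semi_simple_pra (aut_of D)"
  then interpret wfD D by (simp add: wfD_def)
  show "\<exists>D'. rec_eval (cmp 1 ProgE) [encode_code D] (encode_code D') \<and>
        wf_pra (aut_of D') \<and> simple_pra (aut_of D') \<and>
        (lang_one (aut_of D) = {} \<longleftrightarrow> lang_one (aut_of D') = {}) \<and>
        (lang_pos (aut_of D) = {} \<longleftrightarrow> lang_pos (aut_of D') = {})"
    using cD'_rec wf_cD' simple_cD' lang_one_iff lang_pos_iff by blast
qed


end
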